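(* Let $F$ be a field of characteristic $0$, $n\ge 2$, $i=\lfloor n/2\rfloor$, $j=\lfloor (n-1)/2\rfloor$. Let $I\subseteq F[x_1,\dots,x_n]$ be the ideal generated by $x_{\ell+i}+x_\ell$ for $\ell=1,\dots,i$, together with $x_n$ if $n$ is odd. Then for every integer $k\ge 0$, $$r_{(n,2k+2j+1)}-\frac{2k+2j+1}{2j+1}\,h_{(i,k)}(x_1^2,\dots,x_i^2)\in I,$$ where $h_{(i,k)}$ is the complete homogeneous symmetric polynomial of degree $k$ in $i$ variables.
   Context: $p_k=x_1^k+\dots+x_n^k$. $S_n$ is the algebra of symmetric polynomials in $F[x_1,\dots,x_n]$. For $f\in S_n$, $\mathrm{Repr}(f)\in F[y_1,\dots,y_n]$ denotes the unique polynomial with $f=\mathrm{Repr}(f)(p_1,\dots,p_n)$. Regard $\mathrm{Repr}(f)$ as a polynomial in $y_1,y_3,\dots,y_{2j+1}$ with coefficients in $F[y_2,y_4,\dots,y_{2i}]$. For nonnegative integers $(c_1,c_3,\dots,c_{2j+1})$, let $g$ be the coefficient of $y_1^{c_1}y_3^{c_3}\cdots y_{2j+1}^{c_{2j+1}}$; the multiplier of $f$ at $(c_1,\dots,c_{2j+1})$ is $g(p_2,p_4,\dots,p_{2i})$. For $k\ge 2j+1$, $r_{(n,k)}$ is the multiplier of $p_k$ at $(0,\dots,0,1)$. *)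

theory Defs
  imports "HOL-Library.Poly_Mapping"
begin

text \<open>Multivariate polynomials over a coefficient ring 'a in variables indexed by nat,
  represented as finitely supported maps from monomials (exponent vectors) to coefficients.
  Variables x_1,...,x_n (resp. y_1,...,y_n) are those with index in {1..n}.\<close>

type_synonym 'a mpoly = "(nat \<Rightarrow>\<^sub>0 nat) \<Rightarrow>\<^sub>0 'a"

definition Var :: "nat \<Rightarrow> 'a::comm_semiring_1 mpoly" where
  "Var v = Poly_Mapping.single (Poly_Mapping.single v 1) 1"

definition Const :: "'a::comm_semiring_1 \<Rightarrow> 'a mpoly" where
  "Const c = Poly_Mapping.single 0 c"

definition vars :: "'a::zero mpoly \<Rightarrow> nat set" where
  "vars p = \<Union> (Poly_Mapping.keys ` Poly_Mapping.keys p)"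

definition subst :: "(nat \<Rightarrow> 'a::comm_semiring_1 mpoly) \<Rightarrow> 'a mpoly \<Rightarrow> 'a mpoly" where
  "subst a p = (\<Sum>m\<in>Poly_Mapping.keys p.
      Const (Poly_Mapping.lookup p m) * (\<Prod>v\<in>Poly_Mapping.keys m. a v ^ Poly_Mapping.lookup m v))"

definition power_sum :: "nat \<Rightarrow> nat \<Rightarrow> 'a::comm_semiring_1 mpoly" where
  "power_sum n k = (\<Sum>l=1..n. Var l ^ k)"

definition Repr :: "nat \<Rightarrow> 'a::comm_semiring_1 mpoly \<Rightarrow> 'a mpoly" where
  "Repr n f = (THE q. vars q \<subseteq> {1..n} \<and> subst (power_sum n) q = f)"

text \<open>Coefficient of y_1^{c_1} y_3^{c_3} ... y_{2j+1}^{c_{2j+1}} in Repr(f), viewed as a polynomial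
  in the odd variables y_1,y_3,...,y_{2j+1} (j = (n-1) div 2) with coefficients in F[y_2,...,y_{2i}].
  The exponents are given by c at odd indices.\<close>
definition odd_coeff :: "nat \<Rightarrow> 'a::comm_semiring_1 mpoly \<Rightarrow> (nat \<Rightarrow> nat) \<Rightarrow> 'a mpoly" where
  "odd_coeff n f c = (\<Sum>m\<in>{m\<in>Poly_Mapping.keys (Repr n f).
        \<forall>q. odd q \<and> q \<le> 2 * ((n - 1) div 2) + 1 \<longrightarrow> Poly_Mapping.lookup m q = c q}.
      Const (Poly_Mapping.lookup (Repr n f) m) *
        (\<Prod>e\<in>{e\<in>Poly_Mapping.keys m. even e}. Var e ^ Poly_Mapping.lookup m e))"

definition multiplier :: "nat \<Rightarrow> 'a::comm_semiring_1 mpoly \<Rightarrow> (nat \<Rightarrow> nat) \<Rightarrow> 'a mpoly" where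
  "multiplier n f c = subst (power_sum n) (odd_coeff n f c)"

definition r :: "nat \<Rightarrow> nat \<Rightarrow> 'a::comm_semiring_1 mpoly" where
  "r n k = multiplier n (power_sum n k) (\<lambda>q. if q = 2 * ((n - 1) div 2) + 1 then 1 else 0)"

definition complete_hom :: "nat \<Rightarrow> nat \<Rightarrow> 'a::comm_semiring_1 mpoly" where
  "complete_hom i k = (\<Sum>m\<in>{m :: nat \<Rightarrow>\<^sub>0 nat. Poly_Mapping.keys m \<subseteq> {1..i} \<and>
        (\<Sum>v\<in>Poly_Mapping.keys m. Poly_Mapping.lookup m v) = k}.
      Poly_Mapping.single m 1)"

definition ideal_gen :: "nat \<Rightarrow> 'a::comm_semiring_1 mpoly set \<Rightarrow> 'a mpoly set" where
  "ideal_gen n G = {f. \<exists>c. (\<forall>g\<in>G. vars (c g) \<subseteq> {1..n}) \<and> f = (\<Sum>g\<in>G. c g * g)}"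

definition I_gens :: "nat \<Rightarrow> 'a::comm_semiring_1 mpoly set" where
  "I_gens n = (\<lambda>l. Var (l + n div 2) + Var l) ` {1..n div 2} \<union> (if odd n then {Var n} else {})"

end

theory Submission
  imports Defs "HOL-Computational_Algebra.Polynomial"
begin


abbreviation "PMk \<equiv> Poly_Mapping.keys"
abbreviation "PMl \<equiv> Poly_Mapping.lookup"
abbreviation "PMs \<equiv> Poly_Mapping.single"

definition mon :: "(nat \<Rightarrow> 'b::comm_semiring_1) \<Rightarrow> (nat \<Rightarrow>\<^sub>0 nat) \<Rightarrow> 'b" where
  "mon a m = (\<Prod>v\<in>PMk m. a v ^ PMl m v)"

definition evalG :: "('a::zero \<Rightarrow> 'b::comm_semiring_1) \<Rightarrow> (nat \<Rightarrow> 'b) \<Rightarrow> 'a mpoly \<Rightarrow> 'b" where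
  "evalG h a p = (\<Sum>m\<in>PMk p. h (PMl p m) * mon a m)"

abbreviation "eval \<equiv> evalG (\<lambda>x. x)"
abbreviation "evalP \<equiv> evalG (\<lambda>c. [:c:])"

lemma mon_superset:
  assumes "finite S" "PMk m \<subseteq> S"
  shows "mon a m = (\<Prod>v\<in>S. a v ^ PMl m v)"
  unfolding mon_def
  by (rule prod.mono_neutral_left) (use assms in \<open>auto simp: in_keys_iff\<close>)

lemma mon_zero[simp]: "mon a 0 = 1"
  by (simp add: mon_def)

lemma mon_add: "mon a (m + m') = mon a m * mon a m'"
proof -
  let ?S = "PMk m \<union> PMk m'"
  have "mon a (m + m') = (\<Prod>v\<in>?S. a v ^ PMl (m + m') v)"
    by (rule mon_superset) (use keys_add[of m m'] in auto)
  also have "\<dots> = (\<Prod>v\<in>?S. a v ^ PMl m v) * (\<Prod>v\<in>?S. a v ^ PMl m' v)"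
    by (simp add: lookup_add power_add prod.distrib)
  also have "\<dots> = mon a m * mon a m'"
    by (simp add: mon_superset[symmetric])
  finally show ?thesis .
qed

lemma mon_single: "mon a (PMs v k) = a v ^ k"
  by (simp add: mon_def)

lemma mon_cong: "(\<And>v. v \<in> PMk m \<Longrightarrow> a v = b v) \<Longrightarrow> mon a m = mon b m"
  unfolding mon_def by (rule prod.cong) auto

lemma evalG_superset:
  assumes "finite S" "PMk p \<subseteq> S" "h 0 = 0"
  shows "evalG h a p = (\<Sum>m\<in>S. h (PMl p m) * mon a m)"
  unfolding evalG_def
  by (rule sum.mono_neutral_left) (use assms in \<open>auto simp: in_keys_iff\<close>)

lemma evalG_zero[simp]: "evalG h a 0 = 0"
  by (simp add: evalG_def)

lemma evalG_add:
  assumes "h 0 = 0" "\<And>x y. h (x + y) = h x + h y"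
  shows "evalG h a (p + q) = evalG h a p + evalG h a q"
proof -
  let ?S = "PMk p \<union> PMk q"
  have "evalG h a (p + q) = (\<Sum>m\<in>?S. h (PMl (p+q) m) * mon a m)"
    by (rule evalG_superset) (use keys_add[of p q] assms in auto)
  also have "\<dots> = (\<Sum>m\<in>?S. h (PMl p m) * mon a m) + (\<Sum>m\<in>?S. h (PMl q m) * mon a m)"
    by (simp add: lookup_add assms distrib_right sum.distrib)
  also have "\<dots> = evalG h a p + evalG h a q"
    by (simp add: evalG_superset[symmetric] assms)
  finally show ?thesis .
qed

lemma evalG_single:
  assumes "h 0 = 0"
  shows "evalG h a (PMs m c) = h c * mon a m"
  using assms by (simp add: evalG_def)

lemma evalG_sum:
  assumes "h 0 = 0" "\<And>x y. h (x + y) = h x + h y"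
  shows "evalG h a (sum f S) = (\<Sum>i\<in>S. evalG h a (f i))"
  by (induction S rule: infinite_finite_induct) (simp_all add: evalG_add[OF assms])

lemma evalP_add: "evalP a (p + q) = evalP a p + evalP a q"
  by (rule evalG_add) auto
lemma evalP_sum: "evalP a (sum f S) = (\<Sum>i\<in>S. evalP a (f i))"
  by (rule evalG_sum) auto
lemma evalP_single: "evalP a (PMs m c) = [:c:] * mon a m"
  by (rule evalG_single) auto

lemma eval_add: "eval a (p + q) = eval a p + eval a q"
  by (rule evalG_add) auto
lemma eval_sum: "eval a (sum f S) = (\<Sum>i\<in>S. eval a (f i))"
  by (rule evalG_sum) auto
lemma evl_single: "eval a (PMs m c) = c * mon a m"
  by (rule evalG_single) auto

lemma eval_uminus: "eval a (- p) = - eval a (p :: 'a::comm_ring_1 mpoly)"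
proof -
  have "eval a (- p) + eval a p = 0" by (simp only: eval_add[symmetric]) simp
  then show ?thesis by (simp add: eq_neg_iff_add_eq_0)
qed

lemma evl_minus: "eval a (p - q) = eval a p - eval a (q :: 'a::comm_ring_1 mpoly)"
  using eval_add[of a p "-q"] by (simp add: eval_uminus)

lemma pm_expand: "p = (\<Sum>m\<in>PMk p. PMs m (PMl p m))"
proof (rule poly_mapping_eqI)
  fix k
  show "PMl p k = PMl (\<Sum>m\<in>PMk p. PMs m (PMl p m)) k"
    by (simp add: lookup_sum lookup_single when_def in_keys_iff)
qed

lemma eval_mult: "eval a (p * q) = eval a p * eval a (q :: 'a::comm_semiring_1 mpoly)"
proof -
  have "p * q = (\<Sum>m\<in>PMk p. PMs m (PMl p m)) * (\<Sum>m'\<in>PMk q. PMs m' (PMl q m'))"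
    by (simp only: pm_expand[symmetric])
  also have "\<dots> = (\<Sum>m\<in>PMk p. \<Sum>m'\<in>PMk q. PMs m (PMl p m) * PMs m' (PMl q m'))"
    by (rule sum_product)
  also have "\<dots> = (\<Sum>m\<in>PMk p. \<Sum>m'\<in>PMk q. PMs (m + m') (PMl p m * PMl q m'))"
    by (simp only: mult_single)
  finally have "eval a (p * q) = (\<Sum>m\<in>PMk p. \<Sum>m'\<in>PMk q. PMl p m * PMl q m' * mon a (m + m'))"
    by (simp only: eval_sum evl_single)
  also have "\<dots> = (\<Sum>m\<in>PMk p. \<Sum>m'\<in>PMk q. (PMl p m * mon a m) * (PMl q m' * mon a m'))"
    by (intro sum.cong refl) (simp add: mon_add ac_simps)
  also have "\<dots> = (\<Sum>m\<in>PMk p. PMl p m * mon a m) * (\<Sum>m'\<in>PMk q. PMl q m' * mon a m')"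
    by (rule sum_product[symmetric])
  finally show ?thesis by (simp only: evalG_def)
qed

lemma eval_Const[simp]: "eval a (Const c) = c"
  by (simp add: Const_def evl_single)
lemma eval_Var[simp]: "eval a (Var v) = a v"
  by (simp add: Var_def evl_single mon_single)
lemma eval_one[simp]: "eval a 1 = 1"
  using eval_Const[of a 1] by (simp add: Const_def)
lemma eval_power: "eval a (p ^ k) = eval a p ^ k"
  by (induction k) (simp_all add: eval_mult)
lemma eval_prod: "eval a (prod f S) = (\<Prod>i\<in>S. eval a (f i))"
  by (induction S rule: infinite_finite_induct) (simp_all add: eval_mult)

lemma eval_subst: "eval a (subst B p) = eval (\<lambda>v. eval a (B v)) p"
  unfolding subst_def eval_sum eval_mult eval_prod eval_power eval_Const
  unfolding evalG_def[where a="\<lambda>v. eval a (B v)"] mon_def by simp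

lemma evalG_cong: "(\<And>v. v \<in> vars p \<Longrightarrow> a v = b v) \<Longrightarrow> evalG h a p = evalG h b p"
  unfolding evalG_def vars_def
  by (intro sum.cong refl arg_cong2[where f="(*)"] mon_cong) auto

lemma vars_add: "vars (p + q) \<subseteq> vars p \<union> vars q"
proof
  fix v assume "v \<in> vars (p + q)"
  then obtain m where m: "m \<in> PMk (p + q)" "v \<in> PMk m" unfolding vars_def by blast
  then have "m \<in> PMk p \<union> PMk q" using keys_add[of p q] by blast
  with m show "v \<in> vars p \<union> vars q" unfolding vars_def by blast
qed
lemma vars_zero[simp]: "vars 0 = {}" by (simp add: vars_def)
lemma vars_uminus[simp]: "vars (- p) = vars (p:: 'a::ab_group_add mpoly)" by (simp add: vars_def)
lemma vars_minus: "vars (p - q) \<subseteq> vars p \<union> vars (q :: 'a::ab_group_add mpoly)"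
proof
  fix v assume "v \<in> vars (p - q)"
  then obtain m where m: "m \<in> PMk (p - q)" "v \<in> PMk m" unfolding vars_def by blast
  then have "m \<in> PMk p \<union> PMk q" using keys_diff[of p q] by blast
  with m show "v \<in> vars p \<union> vars q" unfolding vars_def by blast
qed
lemma vars_single: "vars (PMs m c) \<subseteq> PMk m" by (simp add: vars_def)
lemma keys_add_nat: "PMk (m + m' :: nat \<Rightarrow>\<^sub>0 nat) = PMk m \<union> PMk m'"
  by (auto simp: in_keys_iff lookup_add)
lemma vars_mult: "vars (p * q) \<subseteq> vars p \<union> vars (q :: 'a::comm_semiring_1 mpoly)"
proof
  fix v assume "v \<in> vars (p * q)"
  then obtain m where m: "m \<in> PMk (p * q)" "v \<in> PMk m" unfolding vars_def by blast
  then obtain a b where "m = a + b" "a \<in> PMk p" "b \<in> PMk q" using keys_mult[of p q] by blast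
  with m show "v \<in> vars p \<union> vars q" unfolding vars_def by (auto simp: keys_add_nat)
qed
lemma vars_sum: "vars (sum f S) \<subseteq> (\<Union>i\<in>S. vars (f i))"
proof
  fix v assume "v \<in> vars (sum f S)"
  then obtain m where m: "m \<in> PMk (sum f S)" "v \<in> PMk m" unfolding vars_def by blast
  then obtain i where "i \<in> S" "m \<in> PMk (f i)" using keys_sum[of f S] by blast
  with m show "v \<in> (\<Union>i\<in>S. vars (f i))" unfolding vars_def by blast
qed
lemma vars_prod: "vars (prod f S) \<subseteq> (\<Union>i\<in>S. vars (f i :: 'a::comm_semiring_1 mpoly))"
proof (induction S rule: infinite_finite_induct)
  case (empty) show ?case by (simp add: vars_def)
next
  case (infinite S) then show ?case by (simp add: vars_def)
next
  case (insert x F)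
  then show ?case using vars_mult[of "f x" "prod f F"] by auto
qed
lemma vars_power: "vars (p ^ k) \<subseteq> vars (p :: 'a::comm_semiring_1 mpoly)"
proof (induction k)
  case (Suc k)
  then show ?case using vars_mult[of p "p^k"] by auto
qed (simp add: vars_def)
lemma vars_Const[simp]: "vars (Const c) = {}" by (simp add: vars_def Const_def)
lemma vars_one[simp]: "vars (1:: 'a::comm_semiring_1 mpoly) = {}" by (simp add: vars_def)
lemma vars_Var: "vars (Var v :: 'a::comm_semiring_1 mpoly) \<subseteq> {v}" by (simp add: vars_def Var_def)

lemma vars_subst: "vars (subst B p) \<subseteq> (\<Union>v\<in>vars p. vars (B v))"
proof -
  have "vars (subst B p) \<subseteq> (\<Union>m\<in>PMk p. vars (Const (PMl p m) * (\<Prod>v\<in>PMk m. B v ^ PMl m v)))"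
    unfolding subst_def by (rule vars_sum)
  also have "\<dots> \<subseteq> (\<Union>v\<in>vars p. vars (B v))"
  proof (rule UN_least)
    fix m assume m: "m \<in> PMk p"
    have "vars (Const (PMl p m) * (\<Prod>v\<in>PMk m. B v ^ PMl m v)) \<subseteq> vars (\<Prod>v\<in>PMk m. B v ^ PMl m v)"
      using vars_mult by fastforce
    also have "\<dots> \<subseteq> (\<Union>v\<in>PMk m. vars (B v ^ PMl m v))" by (rule vars_prod)
    also have "\<dots> \<subseteq> (\<Union>v\<in>PMk m. vars (B v))" using vars_power by blast
    also have "\<dots> \<subseteq> (\<Union>v\<in>vars p. vars (B v))" using m by (auto simp: vars_def)
    finally show "vars (Const (PMl p m) * (\<Prod>v\<in>PMk m. B v ^ PMl m v)) \<subseteq> (\<Union>v\<in>vars p. vars (B v))" .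
  qed
  finally show ?thesis .
qed



lemma const_prod_poly: "[:prod f S:] = (\<Prod>i\<in>S. [:f i:])"
proof (induction S rule: infinite_finite_induct)
  case (insert x F)
  then show ?case by (simp add: mult.commute flip: insert.IH)
qed simp_all

lemma const_power_poly: "[:x ^ k:] = [:x:] ^ k"
proof (induction k)
  case (Suc k)
  then show ?case by (simp add: mult.commute flip: Suc.IH)
qed simp

lemma mon_const_poly: "mon (\<lambda>w. [:a w:]) m = [:mon a m:]"
  by (simp add: mon_def const_prod_poly const_power_poly)

lemma poly_mon: "poly (mon B m) t = mon (\<lambda>w. poly (B w) t) m"
  by (simp add: mon_def poly_prod)

lemma poly_evalP: "poly (evalP B p) t = eval (\<lambda>w. poly (B w) t) p"
  by (simp add: evalG_def poly_sum poly_mon)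

lemma poly_zero_cofinite:
  fixes P :: "'a::field_char_0 poly"
  assumes "finite F" "\<And>t. t \<notin> F \<Longrightarrow> poly P t = 0"
  shows "P = 0"
proof (rule ccontr)
  assume "P \<noteq> 0"
  then have "finite {t. poly P t = 0}" by (rule poly_roots_finite)
  moreover have "UNIV - F \<subseteq> {t. poly P t = 0}" using assms(2) by blast
  ultimately have "finite (UNIV - F)" by (rule finite_subset[rotated])
  then have "finite (UNIV :: 'a set)" using assms(1) by (metis Diff_infinite_finite)
  then show False using infinite_UNIV_char_0 by blast
qed

definition good :: "nat \<Rightarrow> (nat \<Rightarrow> 'a::ab_group_add) \<Rightarrow> bool" where
  "good N a \<longleftrightarrow> (\<forall>l\<in>{1..N}. a l \<noteq> 0 \<and> (\<forall>l'\<in>{1..N}. l \<noteq> l' \<longrightarrow> a l \<noteq> a l' \<and> a l \<noteq> - a l'))"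

lemma good_extend:
  assumes g: "good N a" and t: "t \<notin> insert 0 ((\<lambda>l. a l) ` {1..N} \<union> (\<lambda>l. - a l) ` {1..N})"
  shows "good (Suc N) (a(Suc N := t))"
  unfolding good_def
proof (intro ballI conjI impI)
  fix l l' assume l: "l \<in> {1..Suc N}" and l': "l' \<in> {1..Suc N}" and ne: "l \<noteq> l'"
  have t1: "\<And>x. x \<in> {1..N} \<Longrightarrow> t \<noteq> a x" and t2: "\<And>x. x \<in> {1..N} \<Longrightarrow> t \<noteq> - a x" using t by auto
  have g': "\<And>x y. x \<in> {1..N} \<Longrightarrow> y \<in> {1..N} \<Longrightarrow> x \<noteq> y \<Longrightarrow> a x \<noteq> a y \<and> a x \<noteq> - a y"
    using g unfolding good_def by blast
  have "(a(Suc N := t)) l \<noteq> (a(Suc N := t)) l' \<and> (a(Suc N := t)) l \<noteq> - (a(Suc N := t)) l'"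
  proof (cases "l = Suc N")
    case True
    then have "l' \<in> {1..N}" using l' ne by auto
    then show ?thesis using True t1 t2 ne by auto
  next
    case False
    then have l1: "l \<in> {1..N}" using l by auto
    show ?thesis
    proof (cases "l' = Suc N")
      case True
      then show ?thesis using False l1 t1 t2[of l] by (auto simp: minus_equation_iff[of t])
    next
      case False
      then have "l' \<in> {1..N}" using l' by auto
      then show ?thesis using g'[OF l1 _ ne] \<open>l \<noteq> Suc N\<close> False by auto
    qed
  qed
  then show "(a(Suc N := t)) l \<noteq> (a(Suc N := t)) l'" "(a(Suc N := t)) l \<noteq> - (a(Suc N := t)) l'" by auto
next
  fix l assume l: "l \<in> {1..Suc N}"
  show "(a(Suc N := t)) l \<noteq> 0"
    using g t l unfolding good_def by (cases "l = Suc N") auto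
qed

lemma mono_split: "(m :: nat \<Rightarrow>\<^sub>0 nat) = (m - PMs v (PMl m v)) + PMs v (PMl m v)"
  by (rule poly_mapping_eqI) (simp add: lookup_add lookup_minus lookup_single when_def)

lemma keys_mono_rest: "PMk (m - PMs v (PMl m v) :: nat \<Rightarrow>\<^sub>0 nat) = PMk m - {v}"
  by (auto simp: in_keys_iff lookup_minus lookup_single when_def split: if_splits)

definition slice :: "nat \<Rightarrow> nat \<Rightarrow> 'a::comm_semiring_1 mpoly \<Rightarrow> 'a mpoly" where
  "slice v d p = (\<Sum>m\<in>{m\<in>PMk p. PMl m v = d}. PMs (m - PMs v d) (PMl p m))"

lemma vars_slice: "vars (slice v d p) \<subseteq> vars p - {v}"
proof -
  have "vars (slice v d p) \<subseteq> (\<Union>m\<in>{m\<in>PMk p. PMl m v = d}. vars (PMs (m - PMs v d) (PMl p m)))"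
    unfolding slice_def by (rule vars_sum)
  also have "\<dots> \<subseteq> vars p - {v}"
  proof (rule UN_least)
    fix m assume "m \<in> {m\<in>PMk p. PMl m v = d}"
    then show "vars (PMs (m - PMs v d) (PMl p m)) \<subseteq> vars p - {v}"
      using vars_single[of "m - PMs v d" "PMl p m"] keys_mono_rest[of m v]
      unfolding vars_def by auto
  qed
  finally show ?thesis .
qed

lemma evalP_slice:
  fixes p :: "'a::comm_ring_1 mpoly"
  assumes "\<And>w. w \<noteq> v \<Longrightarrow> B w = [:a w:]" "B v = [:0,1:]"
  shows "coeff (evalP B p) d = eval a (slice v d p)"
proof -
  have mB: "mon B m = monom (mon a (m - PMs v (PMl m v))) (PMl m v)" for m
  proof -
    have "mon B m = mon B (m - PMs v (PMl m v)) * mon B (PMs v (PMl m v))"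
      by (subst mono_split[of m v]) (simp add: mon_add)
    also have "mon B (m - PMs v (PMl m v)) = mon (\<lambda>w. [:a w:]) (m - PMs v (PMl m v))"
      by (rule mon_cong) (use assms keys_mono_rest in auto)
    also have "mon B (PMs v (PMl m v)) = monom 1 (PMl m v)"
      by (simp add: mon_single assms monom_altdef)
    finally show ?thesis by (simp add: mon_const_poly smult_monom)
  qed
  have "coeff (evalP B p) d = (\<Sum>m\<in>PMk p. PMl p m * (if PMl m v = d then mon a (m - PMs v d) else 0))"
    by (simp add: evalG_def coeff_sum mB coeff_monom) (intro sum.cong refl, auto)
  also have "\<dots> = (\<Sum>m\<in>{m\<in>PMk p. PMl m v = d}. PMl p m * mon a (m - PMs v d))"
    by (simp add: sum.inter_filter[symmetric] if_distrib cong: if_cong)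
  also have "\<dots> = eval a (slice v d p)"
    by (simp add: slice_def eval_sum evl_single)
  finally show ?thesis .
qed

lemma lookup_slice:
  assumes "m \<in> PMk p"
  shows "PMl (slice v (PMl m v) p) (m - PMs v (PMl m v)) = PMl p m"
proof -
  let ?d = "PMl m v"
  have eq: "m' = m" if "m' \<in> PMk p" "PMl m' v = ?d" "m' - PMs v ?d = m - PMs v ?d" for m'
    using mono_split[of m' v] mono_split[of m v] that by metis
  have "PMl (slice v ?d p) (m - PMs v ?d) = (\<Sum>m'\<in>{m'\<in>PMk p. PMl m' v = ?d}. (PMl p m' when m' - PMs v ?d = m - PMs v ?d))"
    by (simp add: slice_def lookup_sum lookup_single)
  also have "\<dots> = (\<Sum>m'\<in>{m'\<in>PMk p. PMl m' v = ?d}. (if m' = m then PMl p m else 0))"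
    by (intro sum.cong refl) (auto simp: when_def dest: eq)
  also have "\<dots> = PMl p m" using assms by (simp add: sum.delta)
  finally show ?thesis .
qed

lemma good0: "good 0 a" by (simp add: good_def)

lemma identity:
  fixes p :: "'a::field_char_0 mpoly"
  assumes "vars p \<subseteq> {1..N}" "\<And>a. good N a \<Longrightarrow> eval a p = 0"
  shows "p = 0"
  using assms
proof (induction N arbitrary: p)
  case 0
  have k: "PMk p \<subseteq> {0}"
  proof
    fix m assume "m \<in> PMk p"
    then have "PMk m = {}" using 0(1) unfolding vars_def by auto
    then show "m \<in> {0}" by simp
  qed
  have "eval (\<lambda>_. 0) p = (\<Sum>m\<in>{0}. PMl p m * mon (\<lambda>_. 0) m)"
    by (rule evalG_superset) (use k in auto)
  then have "PMl p 0 = 0" using 0(2)[OF good0] by simp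
  then have "PMk p = {}" using k by (metis in_keys_iff subset_singletonD singletonI empty_iff)
  then show ?case by simp
next
  case (Suc N)
  let ?v = "Suc N"
  have sl: "slice ?v d p = 0" for d
  proof (rule Suc.IH)
    show "vars (slice ?v d p) \<subseteq> {1..N}" using vars_slice[of ?v d p] Suc.prems(1) by fastforce
  next
    fix a :: "nat \<Rightarrow> 'a" assume g: "good N a"
    define B where "B w = (if w = ?v then [:0,1:] else [:a w:])" for w
    let ?F = "insert 0 ((\<lambda>l. a l) ` {1..N} \<union> (\<lambda>l. - a l) ` {1..N})"
    have "evalP B p = 0"
    proof (rule poly_zero_cofinite)
      show "finite ?F" by simp
    next
      fix t assume t: "t \<notin> ?F"
      have "(\<lambda>w. poly (B w) t) = a(?v := t)" by (auto simp: B_def)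
      moreover have "eval (a(?v := t)) p = 0" using Suc.prems(2)[OF good_extend[OF g t]] .
      ultimately show "poly (evalP B p) t = 0"
        by (simp only: poly_evalP)
    qed
    then have "coeff (evalP B p) d = 0" by simp
    moreover have "coeff (evalP B p) d = eval a (slice ?v d p)"
      by (rule evalP_slice) (auto simp: B_def)
    ultimately show "eval a (slice ?v d p) = 0" by simp
  qed
  show ?case
  proof (rule ccontr)
    assume "p \<noteq> 0"
    then obtain m where m: "m \<in> PMk p" by (metis keys_eq_empty ex_in_conv)
    then have "PMl p m \<noteq> 0" by (simp add: in_keys_iff)
    then show False using lookup_slice[OF m, of ?v] sl by simp
  qed
qed



definition Dv :: "nat \<Rightarrow> 'a::comm_semiring_1 mpoly \<Rightarrow> 'a mpoly" where
  "Dv v p = (\<Sum>m\<in>PMk p. PMs (m - PMs v 1) (PMl p m * of_nat (PMl m v)))"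

lemma finite_vars: "finite (vars p)"
  by (simp add: vars_def)

lemma keys_minus_single: "PMk (m - PMs v k :: nat \<Rightarrow>\<^sub>0 nat) \<subseteq> PMk m"
  by (auto simp: in_keys_iff lookup_minus)

lemma vars_Dv: "vars (Dv v p) \<subseteq> vars p"
proof -
  have "vars (Dv v p) \<subseteq> (\<Union>m\<in>PMk p. vars (PMs (m - PMs v 1) (PMl p m * of_nat (PMl m v))))"
    unfolding Dv_def by (rule vars_sum)
  also have "\<dots> \<subseteq> vars p"
  proof (rule UN_least)
    fix m assume m: "m \<in> PMk p"
    have "vars (PMs (m - PMs v 1) (PMl p m * of_nat (PMl m v))) \<subseteq> PMk (m - PMs v 1)" by (rule vars_single)
    also have "\<dots> \<subseteq> PMk m" by (rule keys_minus_single)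
    also have "\<dots> \<subseteq> vars p" using m unfolding vars_def by auto
    finally show "vars (PMs (m - PMs v 1) (PMl p m * of_nat (PMl m v))) \<subseteq> vars p" .
  qed
  finally show ?thesis .
qed

lemma evalP_Dv: "evalP B (Dv v p) = (\<Sum>m\<in>PMk p. [:PMl p m * of_nat (PMl m v):] * mon B (m - PMs v 1))"
  by (simp add: Dv_def evalP_sum evalP_single)

lemma eval_Dv: "eval a (Dv v p) = (\<Sum>m\<in>PMk p. PMl p m * of_nat (PMl m v) * mon a (m - PMs v 1))"
  by (simp add: Dv_def eval_sum evl_single)

lemma pderiv_sum: "pderiv (sum f S) = (\<Sum>i\<in>S. pderiv (f i))"
  by (induction S rule: infinite_finite_induct) (simp_all add: pderiv_add)

lemma pderiv_mon:
  "pderiv (mon B m) = (\<Sum>w\<in>PMk m. [:of_nat (PMl m w):] * mon B (m - PMs w 1) * pderiv (B w))"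
proof -
  have "pderiv (mon B m) = (\<Sum>w\<in>PMk m. (\<Prod>w'\<in>PMk m - {w}. B w' ^ PMl m w') * pderiv (B w ^ PMl m w))"
    unfolding mon_def by (rule pderiv_prod)
  also have "\<dots> = (\<Sum>w\<in>PMk m. [:of_nat (PMl m w):] * mon B (m - PMs w 1) * pderiv (B w))"
  proof (rule sum.cong[OF refl])
    fix w assume w: "w \<in> PMk m"
    then obtain e where e: "PMl m w = Suc e" by (metis in_keys_iff not0_implies_Suc)
    have "mon B (m - PMs w 1) = (\<Prod>w'\<in>PMk m. B w' ^ PMl (m - PMs w 1) w')"
      by (rule mon_superset) (auto simp: keys_minus_single)
    also have "\<dots> = B w ^ PMl (m - PMs w 1) w * (\<Prod>w'\<in>PMk m - {w}. B w' ^ PMl (m - PMs w 1) w')"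
      using w by (simp add: prod.remove)
    also have "(\<Prod>w'\<in>PMk m - {w}. B w' ^ PMl (m - PMs w 1) w') = (\<Prod>w'\<in>PMk m - {w}. B w' ^ PMl m w')"
      by (rule prod.cong) (auto simp: lookup_minus lookup_single)
    finally have "mon B (m - PMs w 1) = B w ^ e * (\<Prod>w'\<in>PMk m - {w}. B w' ^ PMl m w')"
      by (simp add: lookup_minus e)
    then show "(\<Prod>w'\<in>PMk m - {w}. B w' ^ PMl m w') * pderiv (B w ^ PMl m w) =
        [:of_nat (PMl m w):] * mon B (m - PMs w 1) * pderiv (B w)"
      by (simp only: e pderiv_power_Suc) (simp add: ac_simps)
  qed
  finally show ?thesis .
qed

lemma chain_rule:
  assumes "vars p \<subseteq> V" "finite V"
  shows "pderiv (evalP B p) = (\<Sum>w\<in>V. evalP B (Dv w p) * pderiv (B w))"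
proof -
  have "pderiv (evalP B p) = (\<Sum>m\<in>PMk p. [:PMl p m:] * pderiv (mon B m))"
    by (simp add: evalG_def pderiv_sum pderiv_smult)
  also have "\<dots> = (\<Sum>m\<in>PMk p. \<Sum>w\<in>PMk m. [:PMl p m * of_nat (PMl m w):] * mon B (m - PMs w 1) * pderiv (B w))"
    unfolding pderiv_mon sum_distrib_left
    by (intro sum.cong refl) (simp only: mult_to_poly[symmetric] mult.assoc)
  also have "\<dots> = (\<Sum>m\<in>PMk p. \<Sum>w\<in>V. [:PMl p m * of_nat (PMl m w):] * mon B (m - PMs w 1) * pderiv (B w))"
  proof (rule sum.cong[OF refl], rule sum.mono_neutral_left)
    fix m assume "m \<in> PMk p"
    then show "PMk m \<subseteq> V" using assms(1) unfolding vars_def by auto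
  qed (auto simp: assms in_keys_iff)
  also have "\<dots> = (\<Sum>w\<in>V. \<Sum>m\<in>PMk p. [:PMl p m * of_nat (PMl m w):] * mon B (m - PMs w 1) * pderiv (B w))"
    by (rule sum.swap)
  also have "\<dots> = (\<Sum>w\<in>V. evalP B (Dv w p) * pderiv (B w))"
    by (simp add: evalP_Dv sum_distrib_right)
  finally show ?thesis .
qed

definition mdeg :: "(nat \<Rightarrow>\<^sub>0 nat) \<Rightarrow> nat" where "mdeg m = sum (PMl m) (PMk m)"
definition tdeg :: "'a::zero mpoly \<Rightarrow> nat" where "tdeg p = Max (insert 0 (mdeg ` PMk p))"

lemma mdeg_minus_single:
  assumes "v \<in> PMk m"
  shows "Suc (mdeg (m - PMs v 1)) = mdeg m"
proof -
  have "mdeg (m - PMs v 1) = sum (PMl (m - PMs v 1)) (PMk m)"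
    unfolding mdeg_def by (rule sum.mono_neutral_left) (auto simp: keys_minus_single in_keys_iff)
  also have "\<dots> = PMl (m - PMs v 1) v + sum (PMl (m - PMs v 1)) (PMk m - {v})"
    using assms by (simp add: sum.remove)
  also have "sum (PMl (m - PMs v 1)) (PMk m - {v}) = sum (PMl m) (PMk m - {v})"
    by (rule sum.cong) (auto simp: lookup_minus lookup_single)
  finally have "Suc (mdeg (m - PMs v 1)) = Suc (PMl m v - 1) + sum (PMl m) (PMk m - {v})"
    by (simp add: lookup_minus)
  also have "\<dots> = PMl m v + sum (PMl m) (PMk m - {v})"
    using assms by (simp add: in_keys_iff)
  also have "\<dots> = mdeg m" using assms unfolding mdeg_def by (simp add: sum.remove)
  finally show ?thesis .
qed

lemma mdeg_le_tdeg: "m \<in> PMk p \<Longrightarrow> mdeg m \<le> tdeg p"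
  unfolding tdeg_def by (rule Max_ge) auto

lemma keys_Dv: "PMk (Dv v p) \<subseteq> {m - PMs v 1 | m. m \<in> PMk p \<and> v \<in> PMk m}"
proof
  fix x assume "x \<in> PMk (Dv v p)"
  then have "x \<in> (\<Union>m\<in>PMk p. PMk (PMs (m - PMs v 1) (PMl p m * of_nat (PMl m v))))"
    unfolding Dv_def using keys_sum by (rule subsetD[rotated])
  then obtain m where m: "m \<in> PMk p" "x \<in> PMk (PMs (m - PMs v 1) (PMl p m * of_nat (PMl m v)))"
    by (rule UN_E)
  then have "PMl p m * of_nat (PMl m v) \<noteq> 0" "x = m - PMs v 1" by (auto split: if_splits)
  then have "PMl m v \<noteq> 0" "x = m - PMs v 1" by (metis mult_zero_right of_nat_0)+
  then show "x \<in> {m - PMs v 1 | m. m \<in> PMk p \<and> v \<in> PMk m}" using m(1) by (auto simp: in_keys_iff)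
qed

lemma tdeg_Dv:
  assumes "Dv v p \<noteq> 0"
  shows "tdeg (Dv v p) < tdeg p"
proof -
  have lt: "mdeg x < tdeg p" if x: "x \<in> PMk (Dv v p)" for x
  proof -
    obtain m where "m \<in> PMk p" "v \<in> PMk m" "x = m - PMs v 1" using keys_Dv[of v p] x by blast
    then show ?thesis using mdeg_minus_single[of v m] mdeg_le_tdeg[of m p] by simp
  qed
  obtain x where "x \<in> PMk (Dv v p)" using assms by (metis keys_eq_empty ex_in_conv)
  then have "0 < tdeg p" using lt by (metis gr_zeroI less_zeroE)
  have fin: "finite (insert 0 (mdeg ` PMk (Dv v p)))" by simp
  have "\<forall>y\<in>insert 0 (mdeg ` PMk (Dv v p)). y < tdeg p" using lt \<open>0 < tdeg p\<close> by blast
  then show ?thesis unfolding tdeg_def[of "Dv v p"] using Max_less_iff[OF fin] by blast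
qed

lemma pderiv_const_poly_zero: "pderiv [:c:] = 0" by simp

lemma eval_const_dir:
  fixes Q :: "'a::field_char_0 mpoly"
  assumes "w \<in> vars Q \<Longrightarrow> Dv w Q = 0"
  shows "eval z Q = eval (z(w := 0)) Q"
proof (cases "w \<in> vars Q")
  case False
  then show ?thesis by (intro evalG_cong) auto
next
  case True
  define B where "B v = [:z v, (if v = w then 1 else 0):]" for v
  have "pderiv (evalP B Q) = (\<Sum>v\<in>vars Q. evalP B (Dv v Q) * pderiv (B v))"
    by (rule chain_rule) (auto simp: finite_vars)
  also have "\<dots> = 0"
  proof (rule sum.neutral, rule ballI)
    fix v assume "v \<in> vars Q"
    show "evalP B (Dv v Q) * pderiv (B v) = 0"
    proof (cases "v = w")
      case True then show ?thesis using assms \<open>w \<in> vars Q\<close> by simp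
    next
      case False then show ?thesis by (simp add: B_def pderiv_pCons)
    qed
  qed
  finally obtain h where h: "evalP B Q = [:h:]" using pderiv_iszero by blast
  have "eval z Q = poly (evalP B Q) 0"
    by (simp add: poly_evalP B_def)
  also have "\<dots> = poly (evalP B Q) (- z w)" by (simp add: h)
  also have "\<dots> = eval (z(w := 0)) Q"
    by (simp only: poly_evalP) (intro evalG_cong, auto simp: B_def)
  finally show ?thesis .
qed

lemma eval_const_all:
  fixes Q :: "'a::field_char_0 mpoly"
  assumes "\<And>w. w \<in> vars Q \<Longrightarrow> Dv w Q = 0"
  shows "eval z Q = eval (\<lambda>_. 0) Q"
proof -
  have "eval z Q = eval (\<lambda>v. if v < k then 0 else z v) Q" for k
  proof (induction k)
    case 0 then show ?case by simp
  next
    case (Suc k)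
    have "(\<lambda>v. if v < Suc k then 0 else z v) = (\<lambda>v. if v < k then 0 else z v)(k := 0)"
      by auto
    then show ?case using Suc eval_const_dir[OF assms, of k "\<lambda>v. if v < k then 0 else z v"] by simp
  qed
  moreover obtain k where "\<forall>v\<in>vars Q. v < k"
    using finite_vars[of Q] by (metis finite_nat_set_iff_bounded)
  then have "eval (\<lambda>v. if v < k then 0 else z v) Q = eval (\<lambda>_. 0) Q"
    by (intro evalG_cong) auto
  ultimately show ?thesis by simp
qed



definition psum :: "nat \<Rightarrow> (nat \<Rightarrow> 'a::comm_semiring_1) \<Rightarrow> nat \<Rightarrow> 'a" where
  "psum n a k = (\<Sum>l\<in>{1..n}. a l ^ k)"

lemma eval_power_sum: "eval a (power_sum n k) = psum n a k"
  by (simp add: power_sum_def psum_def eval_sum eval_power)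

lemma vars_power_sum: "vars (power_sum n k :: 'a::comm_semiring_1 mpoly) \<subseteq> {1..n}"
proof -
  have "vars (power_sum n k :: 'a mpoly) \<subseteq> (\<Union>l\<in>{1..n}. vars (Var l ^ k :: 'a mpoly))"
    unfolding power_sum_def by (rule vars_sum)
  also have "\<dots> \<subseteq> {1..n}"
  proof (rule UN_least)
    fix l assume "l \<in> {1..n}"
    then show "vars (Var l ^ k :: 'a mpoly) \<subseteq> {1..n}" using vars_power[of "Var l" k] vars_Var[of l] by auto
  qed
  finally show ?thesis .
qed

lemma vandermonde_poly:
  fixes P :: "'a::idom poly"
  assumes "degree P < n" "inj_on x {1..n}" "\<And>l. l \<in> {1..n} \<Longrightarrow> poly P (x l) = 0"
  shows "P = 0"
proof (rule ccontr)
  assume P: "P \<noteq> 0"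
  then have fin: "finite {t. poly P t = 0}" by (rule poly_roots_finite)
  have "x ` {1..n} \<subseteq> {t. poly P t = 0}" using assms(3) by auto
  then have "card (x ` {1..n}) \<le> card {t. poly P t = 0}" using fin by (rule card_mono[rotated])
  also have "\<dots> \<le> degree P" using P by (rule card_poly_roots_bound)
  finally show False using assms(1,2) by (simp add: card_image)
qed

lemma good_update:
  assumes g: "good n a" and l: "l \<in> {1..n}"
    and s: "s \<notin> insert 0 (a ` ({1..n} - {l}) \<union> (\<lambda>v. - a v) ` ({1..n} - {l}))"
  shows "good n (a(l := s))"
  unfolding good_def
proof (intro ballI conjI impI)
  have s1: "\<And>x. x \<in> {1..n} \<Longrightarrow> x \<noteq> l \<Longrightarrow> s \<noteq> a x" and s2: "\<And>x. x \<in> {1..n} \<Longrightarrow> x \<noteq> l \<Longrightarrow> s \<noteq> - a x"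
    using s by auto
  have g': "\<And>x y. x \<in> {1..n} \<Longrightarrow> y \<in> {1..n} \<Longrightarrow> x \<noteq> y \<Longrightarrow> a x \<noteq> a y \<and> a x \<noteq> - a y"
    using g unfolding good_def by blast
  fix i j assume i: "i \<in> {1..n}" and j: "j \<in> {1..n}" and ne: "i \<noteq> j"
  have "(a(l := s)) i \<noteq> (a(l := s)) j \<and> (a(l := s)) i \<noteq> - (a(l := s)) j"
  proof (cases "i = l")
    case True
    then show ?thesis using j ne s1 s2 by auto
  next
    case False
    show ?thesis
    proof (cases "j = l")
      case True
      then show ?thesis using False i s1[of i] s2[of i] by (auto simp: minus_equation_iff[of s])
    next
      case False
      then show ?thesis using g'[OF i j ne] \<open>i \<noteq> l\<close> by auto
    qed
  qed
  then show "(a(l := s)) i \<noteq> (a(l := s)) j" "(a(l := s)) i \<noteq> - (a(l := s)) j" by auto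
next
  fix i assume i: "i \<in> {1..n}"
  show "(a(l := s)) i \<noteq> 0" using g s i unfolding good_def by (cases "i = l") auto
qed

lemma good_exists: "good n (\<lambda>l. of_nat l :: 'a::ring_char_0)"
  unfolding good_def
proof (intro ballI conjI impI)
  fix i j :: nat assume ij: "i \<in> {1..n}" "j \<in> {1..n}" "i \<noteq> j"
  then show "(of_nat i :: 'a) \<noteq> of_nat j" by auto
  show "(of_nat i :: 'a) \<noteq> - of_nat j"
  proof
    assume "(of_nat i :: 'a) = - of_nat j"
    then have "(of_nat (i + j) :: 'a) = 0" by simp
    then have "i + j = 0" by (metis of_nat_eq_0_iff)
    then show False using ij by simp
  qed
qed auto

lemma line_deriv:
  fixes Q :: "'a::field_char_0 mpoly"
  assumes "vars Q \<subseteq> {1..n}" "l \<in> {1..n}" "finite T"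
    "\<And>t. t \<notin> T \<Longrightarrow> eval (psum n (a(l := a l + t))) Q = poly C t"
  shows "poly (pderiv C) 0 = (\<Sum>m\<in>{1..n}. eval (psum n a) (Dv m Q) * (of_nat m * a l ^ (m - 1)))"
proof -
  define B where "B m = (\<Sum>v\<in>{1..n}. [:a v, if v = l then 1 else 0:] ^ m)" for m
  have pB: "poly (B m) t = psum n (a(l := a l + t)) m" for m t
    unfolding B_def psum_def poly_sum poly_power by (intro sum.cong refl) auto
  have pB0: "(\<lambda>k. poly (B k) 0) = psum n a" using pB[of _ 0] by (auto simp: fun_upd_idem)
  have "evalP B Q - C = 0"
  proof (rule poly_zero_cofinite[OF assms(3)])
    fix t assume "t \<notin> T"
    have "(\<lambda>k. poly (B k) t) = psum n (a(l := a l + t))" using pB by auto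
    then show "poly (evalP B Q - C) t = 0" using assms(4)[OF \<open>t \<notin> T\<close>] by (simp add: poly_evalP)
  qed
  then have "C = evalP B Q" by simp
  then have "pderiv C = (\<Sum>m\<in>{1..n}. evalP B (Dv m Q) * pderiv (B m))"
    using chain_rule[OF assms(1)] by simp
  then have "poly (pderiv C) 0 = (\<Sum>m\<in>{1..n}. eval (psum n a) (Dv m Q) * poly (pderiv (B m)) 0)"
    by (simp add: poly_sum poly_evalP pB0)
  also have "\<dots> = (\<Sum>m\<in>{1..n}. eval (psum n a) (Dv m Q) * (of_nat m * a l ^ (m - 1)))"
  proof (rule sum.cong[OF refl])
    fix m assume "m \<in> {1..n}"
    then obtain m' where m': "m = Suc m'" by (cases m) auto
    have "poly (pderiv (B m)) 0 = (\<Sum>v\<in>{1..n}. of_nat m * a v ^ m' * (if v = l then 1 else 0))"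
      unfolding B_def pderiv_sum m' pderiv_power_Suc poly_sum
      by (intro sum.cong refl) (simp add: pderiv_pCons)
    also have "\<dots> = of_nat m * a l ^ (m - 1)"
      using assms(2) by (simp add: m' if_distrib sum.delta cong: if_cong)
    finally show "eval (psum n a) (Dv m Q) * poly (pderiv (B m)) 0 = eval (psum n a) (Dv m Q) * (of_nat m * a l ^ (m - 1))"
      by simp
  qed
  finally show ?thesis .
qed

lemma good_inj: "good n a \<Longrightarrow> inj_on a {1..n}"
  unfolding good_def inj_on_def by blast

lemma jacobian_zero:
  fixes Q :: "'a::field_char_0 mpoly"
  assumes vQ: "vars Q \<subseteq> {1..n}" and g: "inj_on a {1..n}"
    and R: "\<And>l. l \<in> {1..n} \<Longrightarrow>
       (\<Sum>m\<in>{1..n}. eval (psum n a) (Dv m Q) * (of_nat m * a l ^ (m - 1))) = poly S (a l)"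
    and dS: "degree S < n"
  shows "\<And>m. m \<in> {1..n} \<Longrightarrow> eval (psum n a) (Dv m Q) * of_nat m = coeff S (m - 1)"
proof -
  fix m assume m: "m \<in> {1..n}"
  define P where "P = (\<Sum>m\<in>{1..n}. monom (eval (psum n a) (Dv m Q) * of_nat m) (m - 1)) - S"
  have "P = 0"
  proof (rule vandermonde_poly[of P n a])
    have "degree (\<Sum>m\<in>{1..n}. monom (eval (psum n a) (Dv m Q) * of_nat m) (m - 1)) < n"
      using m by (intro degree_sum_less) (auto intro: le_less_trans[OF degree_monom_le])
    moreover have "degree P \<le> max (degree (\<Sum>m\<in>{1..n}. monom (eval (psum n a) (Dv m Q) * of_nat m) (m - 1))) (degree S)"
      unfolding P_def by (rule degree_diff_le_max)
    ultimately show "degree P < n" using dS by simp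
    show "inj_on a {1..n}" using g .
    fix l assume "l \<in> {1..n}"
    then show "poly P (a l) = 0"
      using R[of l] by (simp add: P_def poly_sum poly_monom ac_simps)
  qed
  then have "coeff (\<Sum>m\<in>{1..n}. monom (eval (psum n a) (Dv m Q) * of_nat m) (m - 1)) (m - 1) = coeff S (m - 1)"
    by (simp add: P_def)
  moreover have "coeff (\<Sum>m\<in>{1..n}. monom (eval (psum n a) (Dv m Q) * of_nat m) (m - 1)) (m - 1)
      = (\<Sum>m'\<in>{1..n}. if m' = m then eval (psum n a) (Dv m' Q) * of_nat m' else 0)"
    unfolding coeff_sum coeff_monom using m by (intro sum.cong refl) auto
  ultimately show "eval (psum n a) (Dv m Q) * of_nat m = coeff S (m - 1)"
    using m by (simp add: sum.delta)
qed

lemma indep: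
  fixes Q :: "'a::field_char_0 mpoly"
  assumes "vars Q \<subseteq> {1..n}" "\<And>a. good n a \<Longrightarrow> eval (psum n a) Q = 0"
  shows "Q = 0"
  using assms
proof (induction "tdeg Q" arbitrary: Q rule: less_induct)
  case less
  have G: "eval (psum n a) (Dv m Q) = 0" if g: "good n a" and m: "m \<in> {1..n}" for a m
  proof -
    have "eval (psum n a) (Dv m Q) * of_nat m = coeff 0 (m - 1)"
    proof (rule jacobian_zero[OF less.prems(1) good_inj[OF g] _ _ m])
      fix l assume l: "l \<in> {1..n}"
      let ?F = "insert 0 (a ` ({1..n} - {l}) \<union> (\<lambda>v. - a v) ` ({1..n} - {l}))"
      have "poly (pderiv 0) 0 = (\<Sum>m\<in>{1..n}. eval (psum n a) (Dv m Q) * (of_nat m * a l ^ (m - 1)))"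
      proof (rule line_deriv[OF less.prems(1) l, of "(\<lambda>s. s - a l) ` ?F"])
        fix t assume "t \<notin> (\<lambda>s. s - a l) ` ?F"
        then have "a l + t \<notin> ?F" by (metis add_diff_cancel_left' image_eqI)
        then have "good n (a(l := a l + t))" by (rule good_update[OF g l])
        then show "eval (psum n (a(l := a l + t))) Q = poly 0 t" using less.prems(2) by simp
      qed simp
      then show "(\<Sum>m\<in>{1..n}. eval (psum n a) (Dv m Q) * (of_nat m * a l ^ (m - 1))) = poly 0 (a l)"
        by simp
    qed (use m in auto)
    then show ?thesis using m by simp
  qed
  have D0: "Dv m Q = 0" if m: "m \<in> vars Q" for m
  proof (rule ccontr)
    assume ne: "Dv m Q \<noteq> 0"
    have "m \<in> {1..n}" using m less.prems(1) by auto
    have "Dv m Q = 0"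
    proof (rule less.hyps[OF tdeg_Dv[OF ne]])
      show "vars (Dv m Q) \<subseteq> {1..n}" using vars_Dv[of m Q] less.prems(1) by auto
      fix a :: "nat \<Rightarrow> 'a" assume "good n a"
      then show "eval (psum n a) (Dv m Q) = 0" using G \<open>m \<in> {1..n}\<close> by blast
    qed
    then show False using ne by simp
  qed
  define c where "c = eval (\<lambda>_. 0) Q"
  have "Q - Const c = 0"
  proof (rule identity[of _ n])
    show "vars (Q - Const c) \<subseteq> {1..n}" using vars_minus[of Q "Const c"] less.prems(1) by auto
    fix a :: "nat \<Rightarrow> 'a"
    show "eval a (Q - Const c) = 0" unfolding evl_minus c_def using eval_const_all[OF D0] by simp
  qed
  moreover have "c = 0"
    using less.prems(2)[OF good_exists] eval_const_all[OF D0] c_def by metis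
  ultimately show "Q = 0" by (simp add: Const_def)
qed



lemma qcoeff:
  fixes Q :: "'a::idom poly"
  assumes EQ: "E = [:-c, 1:] * Q" and dE: "degree E \<le> K"
  shows "coeff Q s = (\<Sum>m\<in>{Suc s..K}. coeff E m * c ^ (m - Suc s))"
proof (induction "K - s" arbitrary: s rule: less_induct)
  case less
  show ?case
  proof (cases "K \<le> s")
    case True
    have "coeff Q s = 0"
    proof (cases "Q = 0")
      case False
      have "degree ([:-c, 1:] * Q) = degree [:-c, 1:] + degree Q"
        by (rule degree_mult_eq) (use False in simp_all)
      then have "degree E = Suc (degree Q)" using EQ by simp
      then show ?thesis using dE True by (intro coeff_eq_0) simp
    qed simp
    then show ?thesis using True by simp
  next
    case False
    have IH: "coeff Q (Suc s) = (\<Sum>m\<in>{Suc (Suc s)..K}. coeff E m * c ^ (m - Suc (Suc s)))"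
      using False by (intro less.hyps) auto
    have cE: "coeff E (Suc s) = coeff Q s - c * coeff Q (Suc s)"
      using EQ by (simp add: mult_pCons_left)
    have "coeff Q s = coeff E (Suc s) + c * coeff Q (Suc s)" using cE by simp
    also have "\<dots> = coeff E (Suc s) * c ^ (Suc s - Suc s) + (\<Sum>m\<in>{Suc (Suc s)..K}. coeff E m * c ^ (m - Suc s))"
      unfolding IH sum_distrib_left
      by (simp, intro sum.cong refl) (simp add: Suc_diff_Suc[symmetric] ac_simps)
    also have "\<dots> = (\<Sum>m\<in>{Suc s..K}. coeff E m * c ^ (m - Suc s))"
    proof -
      have "{Suc s..K} = insert (Suc s) {Suc (Suc s)..K}" using False by auto
      then show ?thesis by simp
    qed
    finally show ?thesis .
  qed
qed

definition Epoly :: "nat \<Rightarrow> (nat \<Rightarrow> 'a::comm_ring_1) \<Rightarrow> 'a poly" where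
  "Epoly n a = (\<Prod>l\<in>{1..n}. [:- a l, 1:])"

lemma degree_Epoly: "degree (Epoly n (a :: nat \<Rightarrow> 'a::idom)) = n"
  unfolding Epoly_def by (subst degree_prod_eq_sum_degree) auto

lemma lead_Epoly: "coeff (Epoly n (a :: nat \<Rightarrow> 'a::idom)) n = 1"
  using lead_coeff_prod[of "\<lambda>l. [:- a l, 1:]" "{1..n}"] degree_Epoly[of n a]
  by (simp add: Epoly_def)

lemma newton_F3:
  fixes a :: "nat \<Rightarrow> 'a::idom"
  shows "(\<Sum>m\<le>n. coeff (Epoly n a) m * psum n a (K + m)) = 0"
proof -
  have "(\<Sum>m\<le>n. coeff (Epoly n a) m * psum n a (K + m))
      = (\<Sum>l\<in>{1..n}. a l ^ K * (\<Sum>m\<le>n. coeff (Epoly n a) m * a l ^ m))"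
    unfolding psum_def sum_distrib_left
    by (subst sum.swap) (intro sum.cong refl, simp add: power_add ac_simps)
  also have "\<dots> = (\<Sum>l\<in>{1..n}. a l ^ K * poly (Epoly n a) (a l))"
    by (simp add: poly_altdef degree_Epoly)
  also have "\<dots> = 0"
  proof (rule sum.neutral, rule ballI)
    fix l assume "l \<in> {1..n}"
    then have "poly (Epoly n a) (a l) = 0"
      unfolding Epoly_def poly_prod by (intro prod_zero) auto
    then show "a l ^ K * poly (Epoly n a) (a l) = 0" by simp
  qed
  finally show ?thesis .
qed

lemma newton_F2:
  fixes a :: "nat \<Rightarrow> 'a::idom"
  assumes "1 \<le> d"
  shows "of_nat d * coeff (Epoly n a) d = (\<Sum>m\<in>{d..n}. coeff (Epoly n a) m * psum n a (m - d))"
proof -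
  define Ql where "Ql l = (\<Prod>l'\<in>{1..n} - {l}. [:- a l', 1:])" for l
  have EQ: "Epoly n a = [:- a l, 1:] * Ql l" if "l \<in> {1..n}" for l
    unfolding Epoly_def Ql_def using that by (simp add: prod.remove)
  have "pderiv (Epoly n a) = (\<Sum>l\<in>{1..n}. Ql l)"
    unfolding Epoly_def Ql_def pderiv_prod by (simp add: pderiv_pCons)
  then have "of_nat d * coeff (Epoly n a) d = (\<Sum>l\<in>{1..n}. coeff (Ql l) (d - 1))"
    using coeff_pderiv[of "Epoly n a" "d - 1"] assms by (simp add: coeff_sum)
  also have "\<dots> = (\<Sum>l\<in>{1..n}. \<Sum>m\<in>{d..n}. coeff (Epoly n a) m * a l ^ (m - d))"
  proof (rule sum.cong[OF refl])
    fix l assume "l \<in> {1..n}"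
    show "coeff (Ql l) (d - 1) = (\<Sum>m\<in>{d..n}. coeff (Epoly n a) m * a l ^ (m - d))"
      using qcoeff[OF EQ[OF \<open>l \<in> {1..n}\<close>], of n "d - 1"] assms by (simp add: degree_Epoly)
  qed
  also have "\<dots> = (\<Sum>m\<in>{d..n}. coeff (Epoly n a) m * psum n a (m - d))"
    unfolding psum_def sum_distrib_left by (rule sum.swap)
  finally show ?thesis .
qed

definition expr :: "nat \<Rightarrow> ((nat \<Rightarrow> 'a::comm_ring_1) \<Rightarrow> 'a) \<Rightarrow> bool" where
  "expr n f \<longleftrightarrow> (\<exists>q. vars q \<subseteq> {1..n} \<and> (\<forall>a. eval (psum n a) q = f a))"

lemma expr_const: "expr n (\<lambda>a. c)"
  unfolding expr_def by (intro exI[of _ "Const c"]) simp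

lemma expr_add: "expr n f \<Longrightarrow> expr n g \<Longrightarrow> expr n (\<lambda>a. f a + g a)"
  unfolding expr_def
proof (elim exE conjE)
  fix q q' assume "vars q \<subseteq> {1..n}" "\<forall>a. eval (psum n a) q = f a" "vars q' \<subseteq> {1..n}" "\<forall>a. eval (psum n a) q' = g a"
  then show "\<exists>q. vars q \<subseteq> {1..n} \<and> (\<forall>a. eval (psum n a) q = f a + g a)"
    using vars_add[of q q'] by (intro exI[of _ "q + q'"]) (auto simp: eval_add)
qed

lemma expr_mult: "expr n f \<Longrightarrow> expr n g \<Longrightarrow> expr n (\<lambda>a. f a * g a)"
  unfolding expr_def
proof (elim exE conjE)
  fix q q' assume "vars q \<subseteq> {1..n}" "\<forall>a. eval (psum n a) q = f a" "vars q' \<subseteq> {1..n}" "\<forall>a. eval (psum n a) q' = g a"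
  then show "\<exists>q. vars q \<subseteq> {1..n} \<and> (\<forall>a. eval (psum n a) q = f a * g a)"
    using vars_mult[of q q'] by (intro exI[of _ "q * q'"]) (auto simp: eval_mult)
qed

lemma expr_sum: "(\<And>i. i \<in> S \<Longrightarrow> expr n (f i)) \<Longrightarrow> expr n (\<lambda>a. \<Sum>i\<in>S. f i a)"
proof (induction S rule: infinite_finite_induct)
  case (infinite S) then show ?case by (simp add: expr_const)
next
  case empty then show ?case by (simp add: expr_const)
next
  case (insert x F) then show ?case by (simp add: expr_add)
qed

lemma expr_psum: "k \<le> n \<Longrightarrow> expr n (\<lambda>a. psum n a k)"
proof (cases "k = 0")
  case True
  then show ?thesis using expr_const[of n "of_nat n"] by (simp add: psum_def)
next
  case False
  assume "k \<le> n"
  then show ?thesis unfolding expr_def using False vars_Var[of k]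
    by (intro exI[of _ "Var k"]) auto
qed

lemma expr_Ec:
  fixes n :: nat
  shows "expr n (\<lambda>a::nat \<Rightarrow> 'a::field_char_0. coeff (Epoly n a) d)"
proof (induction "n - d" arbitrary: d rule: less_induct)
  case less
  consider "n < d" | "d = n" | "1 \<le> d" "d < n" | "d = 0" "0 < n" by linarith
  then show ?case
  proof cases
    case 1
    then show ?thesis using expr_const[of n 0] by (simp add: coeff_eq_0 degree_Epoly)
  next
    case 2
    then show ?thesis using expr_const[of n 1] by (simp add: lead_Epoly)
  next
    case 3
    have eq: "coeff (Epoly n a) d = (\<Sum>m\<in>{Suc d..n}. coeff (Epoly n a) m * psum n a (m - d)) / (of_nat d - of_nat n)"
      for a :: "nat \<Rightarrow> 'a"
    proof -
      have "of_nat d * coeff (Epoly n a) d = coeff (Epoly n a) d * of_nat n + (\<Sum>m\<in>{Suc d..n}. coeff (Epoly n a) m * psum n a (m - d))"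
        using newton_F2[OF 3(1), of n a] 3 by (simp add: sum.atLeast_Suc_atMost psum_def)
      moreover have "(of_nat d - of_nat n :: 'a) \<noteq> 0" using 3 by simp
      ultimately show ?thesis by (simp add: field_simps)
    qed
    have "expr n (\<lambda>a::nat \<Rightarrow> 'a. (\<Sum>m\<in>{Suc d..n}. coeff (Epoly n a) m * psum n a (m - d)) * (1 / (of_nat d - of_nat n)))"
      by (intro expr_mult expr_sum expr_const less.hyps expr_psum) (use 3 in auto)
    then show ?thesis by (simp add: eq)
  next
    case 4
    have eq: "coeff (Epoly n a) 0 = - (\<Sum>m\<in>{1..n}. coeff (Epoly n a) m * psum n a m) / of_nat n"
      for a :: "nat \<Rightarrow> 'a"
    proof -
      have "(\<Sum>m\<le>n. coeff (Epoly n a) m * psum n a (0 + m)) = 0" by (rule newton_F3)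
      moreover have "{..n} = insert 0 {1..n}" by auto
      ultimately have "coeff (Epoly n a) 0 * of_nat n + (\<Sum>m\<in>{1..n}. coeff (Epoly n a) m * psum n a m) = 0"
        by (simp add: psum_def)
      moreover have "(of_nat n :: 'a) \<noteq> 0" using 4 by simp
      ultimately show ?thesis by (simp add: field_simps add_eq_0_iff)
    qed
    have "expr n (\<lambda>a::nat \<Rightarrow> 'a. (\<Sum>m\<in>{1..n}. coeff (Epoly n a) m * psum n a m) * (- 1 / of_nat n))"
      by (intro expr_mult expr_sum expr_const less.hyps expr_psum) (use 4 in auto)
    then show ?thesis using 4 by (simp add: eq)
  qed
qed

lemma expr_psum_all:
  fixes n :: nat
  shows "expr n (\<lambda>a::nat \<Rightarrow> 'a::field_char_0. psum n a N)"
proof (induction N rule: less_induct)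
  case (less N)
  show ?case
  proof (cases "N \<le> n")
    case True then show ?thesis by (rule expr_psum)
  next
    case False
    define K where "K = N - n"
    have eq: "psum n a N = - (\<Sum>m<n. coeff (Epoly n a) m * psum n a (K + m))" for a :: "nat \<Rightarrow> 'a"
    proof -
      have "(\<Sum>m\<le>n. coeff (Epoly n a) m * psum n a (K + m)) = 0" by (rule newton_F3)
      then have "(\<Sum>m<n. coeff (Epoly n a) m * psum n a (K + m)) + psum n a N = 0"
        using False by (simp add: lessThan_Suc_atMost[symmetric] lead_Epoly K_def)
      then show ?thesis by (simp add: add_eq_0_iff)
    qed
    have "expr n (\<lambda>a::nat \<Rightarrow> 'a. (\<Sum>m<n. coeff (Epoly n a) m * psum n a (K + m)) * (- 1))"
      by (intro expr_mult expr_sum expr_const expr_Ec less.IH) (use False in \<open>auto simp: K_def\<close>)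
    then show ?thesis by (simp add: eq)
  qed
qed

lemma eval_subst_psum: "eval a (subst (power_sum n) q) = eval (psum n a) q"
proof -
  have "(\<lambda>v. eval a (power_sum n v)) = psum n a" by (rule ext) (simp add: eval_power_sum)
  then show ?thesis by (simp add: eval_subst)
qed

lemma vars_subst_psum: "vars (subst (power_sum n) q :: 'a::comm_semiring_1 mpoly) \<subseteq> {1..n}"
  using vars_subst[of "power_sum n" q] vars_power_sum[of n] by blast

lemma Repr_psum:
  fixes n N :: nat
  defines "Q \<equiv> Repr n (power_sum n N :: 'a::field_char_0 mpoly)"
  shows "vars Q \<subseteq> {1..n} \<and> (\<forall>a. eval (psum n a) Q = psum n a N)"
proof -
  obtain q :: "'a mpoly" where q: "vars q \<subseteq> {1..n}" "\<And>a. eval (psum n a) q = psum n a N"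
    using expr_psum_all[of n N] unfolding expr_def by blast
  have sq: "subst (power_sum n) q = power_sum n N"
  proof -
    have "subst (power_sum n) q - power_sum n N = 0"
    proof (rule identity[of _ n])
      show "vars (subst (power_sum n) q - power_sum n N) \<subseteq> {1..n}"
        using vars_minus[of "subst (power_sum n) q" "power_sum n N"] vars_subst_psum[of n q] vars_power_sum[of n N]
        by blast
      fix a :: "nat \<Rightarrow> 'a"
      show "eval a (subst (power_sum n) q - power_sum n N) = 0"
        by (simp add: evl_minus eval_subst_psum eval_power_sum q(2))
    qed
    then show ?thesis by simp
  qed
  have uniq: "q' = q" if "vars q' \<subseteq> {1..n} \<and> subst (power_sum n) q' = power_sum n N" for q'
  proof -
    have "q' - q = 0"
    proof (rule indep[of _ n])
      show "vars (q' - q) \<subseteq> {1..n}" using vars_minus[of q' q] that q(1) by blast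
      fix a :: "nat \<Rightarrow> 'a"
      have "eval (psum n a) q' = psum n a N"
        using that eval_subst_psum[of a n q'] eval_power_sum[of a n N] by simp
      then show "eval (psum n a) (q' - q) = 0" by (simp add: evl_minus q(2))
    qed
    then show ?thesis by simp
  qed
  have "Q = q" unfolding Q_def Repr_def
    by (rule the1_equality) (use q(1) sq uniq in blast)+
  then show ?thesis using q by simp
qed



fun hh :: "'a::comm_semiring_1 list \<Rightarrow> nat \<Rightarrow> 'a" where
  "hh [] k = (if k = 0 then 1 else 0)"
| "hh (c # cs) k = (\<Sum>d\<le>k. c ^ d * hh cs (k - d))"

lemma hh_zero[simp]: "hh X 0 = 1"
  by (induction X) auto

declare hh.simps(2)[simp del]

lemma hh_single: "hh [y] K = y ^ K"
proof -
  have "hh [y] K = (\<Sum>d\<le>K. if d = K then y ^ d else 0)"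
    unfolding hh.simps(2) by (intro sum.cong refl) auto
  then show ?thesis by simp
qed

lemma hh_rec: "hh (c # cs) (Suc k) = hh cs (Suc k) + c * hh (c # cs) k"
proof -
  have "hh (c # cs) (Suc k) = c ^ 0 * hh cs (Suc k - 0) + (\<Sum>d\<le>k. c ^ Suc d * hh cs (Suc k - Suc d))"
    by (simp only: hh.simps sum.atMost_Suc_shift)
  also have "\<dots> = hh cs (Suc k) + c * hh (c # cs) k"
    by (simp add: sum_distrib_left ac_simps hh.simps(2))
  finally show ?thesis .
qed

lemma hh_identity:
  fixes u c :: "'a::comm_ring_1"
  shows "hh (u # X) (Suc J) = hh (c # X) (Suc J) + (u - c) * hh (u # c # X) J"
proof (induction J)
  case 0
  then show ?case by (simp only: hh_rec[of u X 0] hh_rec[of c X 0] hh_zero) (simp add: algebra_simps)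
next
  case (Suc J)
  have "hh (u # X) (Suc (Suc J)) - hh (c # X) (Suc (Suc J)) = u * hh (u # X) (Suc J) - c * hh (c # X) (Suc J)"
    by (simp only: hh_rec[of u X "Suc J"] hh_rec[of c X "Suc J"]) (simp add: algebra_simps)
  also have "\<dots> = (u - c) * hh (u # X) (Suc J) + c * (hh (u # X) (Suc J) - hh (c # X) (Suc J))"
    by (simp add: algebra_simps)
  also have d: "hh (u # X) (Suc J) - hh (c # X) (Suc J) = (u - c) * hh (u # c # X) J"
    using Suc.IH by simp
  have "(u - c) * hh (u # X) (Suc J) + c * (hh (u # X) (Suc J) - hh (c # X) (Suc J)) = (u - c) * (hh (u # X) (Suc J) + c * hh (u # c # X) J)"
    by (simp only: d) (simp add: algebra_simps)
  also have "hh (u # X) (Suc J) + c * hh (u # c # X) J = hh (c # X) (Suc J) + u * hh (u # c # X) J"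
    by (subst Suc.IH) (simp add: algebra_simps)
  also have "\<dots> = hh (u # c # X) (Suc J)"
    by (simp add: hh_rec[of u "c # X" J] hh_rec[of c X J])
  finally show ?case by (simp add: algebra_simps)
qed

lemma coeff_quad_mult:
  fixes p :: "'a::comm_ring_1 poly"
  assumes "degree p \<le> d"
  shows "coeff ([:a, 0, 1:] * p) (Suc (Suc d)) = coeff p d"
  using assms by (simp add: mult_pCons_left coeff_eq_0)

lemma interp:
  fixes Y X :: "'a::comm_ring_1 list"
  assumes "Y \<noteq> []" "length Y \<le> Suc K"
  shows "\<exists>V. degree V \<le> 2 * (length Y - 1) \<and> coeff V (2 * (length Y - 1)) = hh (rev Y @ X) (Suc K - length Y)
     \<and> (\<forall>y. y ^ 2 \<in> set Y \<longrightarrow> poly V y = hh (y ^ 2 # X) K)"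
  using assms
proof (induction Y arbitrary: X K)
  case Nil then show ?case by simp
next
  case (Cons c Y')
  show ?case
  proof (cases "Y' = []")
    case True
    then show ?thesis by (intro exI[of _ "[:hh (c # X) K:]"]) auto
  next
    case False
    obtain K' where K: "K = Suc K'" using Cons.prems False by (cases K) auto
    have lY: "length Y' \<le> Suc K'" using Cons.prems K by simp
    obtain V' where V': "degree V' \<le> 2 * (length Y' - 1)"
      "coeff V' (2 * (length Y' - 1)) = hh (rev Y' @ c # X) (Suc K' - length Y')"
      "\<And>y. y ^ 2 \<in> set Y' \<Longrightarrow> poly V' y = hh (y ^ 2 # c # X) K'"
      using Cons.IH[OF False lY, of "c # X"] by blast
    define V where "V = [:hh (c # X) K:] + [:- c, 0, 1:] * V'"
    have l1: "length Y' \<ge> 1" using False by (cases Y') auto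
    have dV: "degree V \<le> 2 * (length (c # Y') - 1)"
    proof -
      have "degree ([:- c, 0, 1:] * V') \<le> 2 + 2 * (length Y' - 1)"
        using degree_mult_le[of "[:- c, 0, 1:]" V'] V'(1) by simp
      then show ?thesis unfolding V_def using l1
        by (intro order.trans[OF degree_add_le_max]) auto
    qed
    have cV: "coeff V (2 * (length (c # Y') - 1)) = hh (rev (c # Y') @ X) (Suc K - length (c # Y'))"
    proof -
      have e: "2 * (length (c # Y') - 1) = Suc (Suc (2 * (length Y' - 1)))" using l1 by simp
      have "coeff V (2 * (length (c # Y') - 1)) = coeff V' (2 * (length Y' - 1))"
        unfolding e V_def using coeff_quad_mult[OF V'(1), of "- c"] by simp
      then show ?thesis using V'(2) K by simp
    qed
    have pV: "poly V y = hh (y ^ 2 # X) K" if "y ^ 2 \<in> set (c # Y')" for y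
    proof (cases "y ^ 2 = c")
      case True
      show ?thesis by (simp add: V_def power2_eq_square algebra_simps flip: True)
    next
      case False
      then have "y ^ 2 \<in> set Y'" using that by simp
      then have "poly V y = hh (c # X) K + (y ^ 2 - c) * hh (y ^ 2 # c # X) K'"
        by (simp add: V_def V'(3) power2_eq_square algebra_simps)
      also have "\<dots> = hh (y ^ 2 # X) K" using hh_identity[of "y ^ 2" X K' c] K by simp
      finally show ?thesis .
    qed
    show ?thesis using dV cV pV by blast
  qed
qed

definition Mset :: "nat \<Rightarrow> nat \<Rightarrow> (nat \<Rightarrow>\<^sub>0 nat) set" where
  "Mset i k = {m :: nat \<Rightarrow>\<^sub>0 nat. PMk m \<subseteq> {1..i} \<and> (\<Sum>v\<in>PMk m. PMl m v) = k}"

lemma mdeg_superset: "finite S \<Longrightarrow> PMk m \<subseteq> S \<Longrightarrow> mdeg m = sum (PMl m) S"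
  unfolding mdeg_def by (rule sum.mono_neutral_left) (auto simp: in_keys_iff)

lemma mdeg_add: "mdeg (m + m') = mdeg m + mdeg m'"
proof -
  let ?S = "PMk m \<union> PMk m'"
  have "mdeg (m + m') = sum (PMl (m + m')) ?S" by (rule mdeg_superset) (auto simp: keys_add_nat)
  also have "\<dots> = sum (PMl m) ?S + sum (PMl m') ?S" by (simp add: lookup_add sum.distrib)
  also have "\<dots> = mdeg m + mdeg m'" by (simp add: mdeg_superset[symmetric])
  finally show ?thesis .
qed

lemma mdeg_single: "mdeg (PMs v d) = d"
  by (simp add: mdeg_def)

lemma Mset_mdeg: "Mset i k = {m. PMk m \<subseteq> {1..i} \<and> mdeg m = k}"
  by (simp add: Mset_def mdeg_def)

lemma Mset_bij:
  "bij_betw (\<lambda>(d, m). m + PMs (Suc i) d) (SIGMA d:{..k}. Mset i (k - d)) (Mset (Suc i) k)"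
proof (rule bij_betwI')
  fix x y assume x: "x \<in> (SIGMA d:{..k}. Mset i (k - d))" and y: "y \<in> (SIGMA d:{..k}. Mset i (k - d))"
  obtain d m where xd0: "x = (d, m)" "m \<in> Mset i (k - d)" using x by blast
  then have xd: "x = (d, m)" "PMk m \<subseteq> {1..i}" unfolding Mset_def by simp_all
  obtain d' m' where yd0: "y = (d', m')" "m' \<in> Mset i (k - d')" using y by blast
  then have yd: "y = (d', m')" "PMk m' \<subseteq> {1..i}" unfolding Mset_def by simp_all
  have "Suc i \<notin> PMk m" "Suc i \<notin> PMk m'" using xd yd by auto
  then have m0: "PMl m (Suc i) = 0" "PMl m' (Suc i) = 0" by (simp_all add: in_keys_iff)
  show "((\<lambda>(d, m). m + PMs (Suc i) d) x = (\<lambda>(d, m). m + PMs (Suc i) d) y) = (x = y)"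
  proof
    assume eq: "(\<lambda>(d, m). m + PMs (Suc i) d) x = (\<lambda>(d, m). m + PMs (Suc i) d) y"
    then have e: "m + PMs (Suc i) d = m' + PMs (Suc i) d'" using xd yd by simp
    then have "PMl (m + PMs (Suc i) d) (Suc i) = PMl (m' + PMs (Suc i) d') (Suc i)" by simp
    then have "d = d'" using m0 by (simp add: lookup_add)
    then show "x = y" using e xd yd by simp
  qed simp
next
  fix x assume x: "x \<in> (SIGMA d:{..k}. Mset i (k - d))"
  then obtain d m where xd0: "x = (d, m)" "d \<in> {..k}" "m \<in> Mset i (k - d)" by blast
  then have xd: "x = (d, m)" "d \<le> k" "PMk m \<subseteq> {1..i}" "mdeg m = k - d"
    unfolding Mset_mdeg by simp_all
  have "PMk (m + PMs (Suc i) d) \<subseteq> {1..Suc i}" using xd(3) by (auto simp: keys_add_nat)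
  moreover have "mdeg (m + PMs (Suc i) d) = k" using xd by (simp add: mdeg_add mdeg_single)
  ultimately show "(\<lambda>(d, m). m + PMs (Suc i) d) x \<in> Mset (Suc i) k" using xd by (simp add: Mset_mdeg)
next
  fix y assume y: "y \<in> Mset (Suc i) k"
  define d where "d = PMl y (Suc i)"
  define m where "m = y - PMs (Suc i) d"
  have y_eq: "y = m + PMs (Suc i) d" unfolding m_def d_def by (rule mono_split)
  have "PMk y \<subseteq> {1..Suc i}" using y by (simp add: Mset_def)
  then have km: "PMk m \<subseteq> {1..i}" unfolding m_def d_def keys_mono_rest by auto
  have md: "mdeg y = mdeg m + d" using y_eq by (simp add: mdeg_add mdeg_single)
  have "mdeg y = k" using y by (simp add: Mset_mdeg)
  then have "d \<le> k" "mdeg m = k - d" using md by auto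
  then have "(d, m) \<in> (SIGMA d:{..k}. Mset i (k - d))" using km by (simp add: Mset_mdeg)
  then show "\<exists>x\<in>(SIGMA d:{..k}. Mset i (k - d)). y = (\<lambda>(d, m). m + PMs (Suc i) d) x"
    using y_eq by (intro bexI[of _ "(d, m)"]) simp_all
qed

lemma Mset_zero: "Mset 0 k = (if k = 0 then {0} else {})"
proof -
  have "PMk m \<subseteq> {1..0} \<longleftrightarrow> m = 0" for m :: "nat \<Rightarrow>\<^sub>0 nat" by auto
  then show ?thesis by (auto simp: Mset_mdeg mdeg_def)
qed

lemma finite_Mset: "finite (Mset i k)"
proof (induction i arbitrary: k)
  case 0 then show ?case by (simp add: Mset_zero)
next
  case (Suc i)
  have "finite (SIGMA d:{..k}. Mset i (k - d))" using Suc by auto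
  then show ?case using bij_betw_finite[OF Mset_bij] by blast
qed

lemma hv_rec:
  "(\<Sum>m\<in>Mset (Suc i) k. mon c m) = (\<Sum>d\<le>k. c (Suc i) ^ d * (\<Sum>m\<in>Mset i (k - d). mon c m))"
proof -
  have "(\<Sum>m\<in>Mset (Suc i) k. mon c m) = (\<Sum>x\<in>(SIGMA d:{..k}. Mset i (k - d)). mon c ((\<lambda>(d, m). m + PMs (Suc i) d) x))"
    by (rule sum.reindex_bij_betw[OF Mset_bij, symmetric])
  also have "\<dots> = (\<Sum>(d, m)\<in>(SIGMA d:{..k}. Mset i (k - d)). mon c (m + PMs (Suc i) d))"
    by (intro sum.cong refl) auto
  also have "\<dots> = (\<Sum>d\<le>k. \<Sum>m\<in>Mset i (k - d). mon c (m + PMs (Suc i) d))"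
    by (rule sum.Sigma[symmetric]) (auto simp: finite_Mset)
  also have "\<dots> = (\<Sum>d\<le>k. c (Suc i) ^ d * (\<Sum>m\<in>Mset i (k - d). mon c m))"
    by (simp add: mon_add mon_single sum_distrib_left ac_simps)
  finally show ?thesis .
qed

lemma hv_hh: "(\<Sum>m\<in>Mset i k. mon c m) = hh (map c (rev [1..<Suc i])) k"
proof (induction i arbitrary: k)
  case 0 then show ?case by (simp add: Mset_zero)
next
  case (Suc i)
  have "rev [1..<Suc (Suc i)] = Suc i # rev [1..<Suc i]" by simp
  then show ?case by (simp add: hv_rec Suc hh.simps(2))
qed

lemma eval_complete_hom: "eval c (complete_hom i k) = hh (map c (rev [1..<Suc i])) k"
proof -
  have "eval c (complete_hom i k) = (\<Sum>m\<in>Mset i k. mon c m)"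
    unfolding complete_hom_def Mset_def[symmetric] by (simp add: eval_sum evl_single)
  then show ?thesis by (simp add: hv_hh)
qed

lemma vars_complete_hom: "vars (complete_hom i k :: 'a::comm_semiring_1 mpoly) \<subseteq> {1..i}"
proof -
  have "vars (complete_hom i k :: 'a mpoly) \<subseteq> (\<Union>m\<in>Mset i k. vars (PMs m (1::'a)))"
    unfolding complete_hom_def Mset_def[symmetric] by (rule vars_sum)
  also have "\<dots> \<subseteq> {1..i}"
  proof (rule UN_least)
    fix m assume "m \<in> Mset i k"
    then show "vars (PMs m (1::'a)) \<subseteq> {1..i}" using vars_single[of m "1::'a"] by (auto simp: Mset_def)
  qed
  finally show ?thesis .
qed



lemma mon_zero_factor:
  assumes "w \<in> PMk m" "z w = 0"
  shows "mon z m = (0::'a::comm_semiring_1)"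
proof -
  have "PMl m w \<noteq> 0" using assms(1) by (simp add: in_keys_iff)
  then have "z w ^ PMl m w = 0" using assms(2) by (simp add: power_0_left)
  then show ?thesis unfolding mon_def using assms(1) by (intro prod_zero) auto
qed

lemma odd_le_J: "odd (w::nat) \<Longrightarrow> w \<le> n \<Longrightarrow> w \<le> 2 * ((n - 1) div 2) + 1"
  by (elim oddE) presburger

lemma odd_coeff_eval:
  fixes f :: "'a::field_char_0 mpoly" and n :: nat
  defines "J \<equiv> 2 * ((n - 1) div 2) + 1"
  assumes n: "1 \<le> n" and vQ: "vars (Repr n f) \<subseteq> {1..n}"
    and zodd: "\<And>q. odd q \<Longrightarrow> q \<le> n \<Longrightarrow> z q = 0"
  shows "eval z (odd_coeff n f (\<lambda>q. if q = J then 1 else 0)) = eval z (Dv J (Repr n f))"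
proof -
  define Q where "Q = Repr n f"
  define cc where "cc = (\<lambda>q::nat. if q = J then 1 else (0::nat))"
  define P where "P m \<longleftrightarrow> (\<forall>q. odd q \<and> q \<le> J \<longrightarrow> PMl m q = cc q)" for m
  have Jn: "J \<le> n" "odd J" using n unfolding J_def by auto
  have LHS: "eval z (odd_coeff n f cc) = (\<Sum>m\<in>{m\<in>PMk Q. P m}. PMl Q m * (\<Prod>e\<in>{e\<in>PMk m. even e}. z e ^ PMl m e))"
    unfolding odd_coeff_def Q_def[symmetric] P_def J_def[symmetric]
    by (simp add: eval_sum eval_mult eval_prod eval_power)
  have RHS: "eval z (Dv J Q) = (\<Sum>m\<in>PMk Q. PMl Q m * of_nat (PMl m J) * mon z (m - PMs J 1))"
    by (rule eval_Dv)
  have tm: "PMl Q m * of_nat (PMl m J) * mon z (m - PMs J 1) =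
     (if P m then PMl Q m * (\<Prod>e\<in>{e\<in>PMk m. even e}. z e ^ PMl m e) else 0)" if m: "m \<in> PMk Q" for m
  proof -
    have km: "PMk m \<subseteq> {1..n}" using m vQ unfolding Q_def vars_def by auto
    show ?thesis
    proof (cases "P m")
      case True
      then have mJ: "PMl m J = 1" using Jn unfolding P_def cc_def by auto
      have oz: "PMl m w = 0" if "odd w" "w \<in> PMk m" "w \<noteq> J" for w
      proof -
        have "w \<le> n" using km that by auto
        then have "w \<le> J" using odd_le_J[OF that(1)] unfolding J_def by simp
        then show ?thesis using True that unfolding P_def cc_def by auto
      qed
      have "mon z (m - PMs J 1) = (\<Prod>w\<in>PMk m. z w ^ PMl (m - PMs J 1) w)"
        by (rule mon_superset) (auto simp: keys_minus_single)
      also have "\<dots> = (\<Prod>w\<in>PMk m. if even w then z w ^ PMl m w else 1)"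
      proof (rule prod.cong[OF refl])
        fix w assume w: "w \<in> PMk m"
        show "z w ^ PMl (m - PMs J 1) w = (if even w then z w ^ PMl m w else 1)"
        proof (cases "even w")
          case True
          then have "w \<noteq> J" using Jn by auto
          then show ?thesis using True by (simp add: lookup_minus lookup_single)
        next
          case False
          then show ?thesis using oz[OF False w] w mJ
            by (cases "w = J") (auto simp: lookup_minus lookup_single in_keys_iff)
        qed
      qed
      also have "\<dots> = (\<Prod>e\<in>{e\<in>PMk m. even e}. z e ^ PMl m e)"
        by (simp add: prod.inter_filter)
      finally show ?thesis using True mJ by simp
    next
      case False
      then obtain q where q: "odd q" "q \<le> J" "PMl m q \<noteq> cc q" unfolding P_def by auto
      have zq: "z q = 0" using zodd[OF q(1)] q(2) Jn by simp
      have "PMl m J = 0 \<or> mon z (m - PMs J 1) = 0"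
      proof (cases "q = J")
        case True
        then have "PMl m J \<noteq> 1" using q unfolding cc_def by simp
        moreover have "mon z (m - PMs J 1) = 0" if "PMl m J \<ge> 2"
          by (rule mon_zero_factor[of J]) (use that True zq in \<open>auto simp: in_keys_iff lookup_minus\<close>)
        ultimately show ?thesis by (cases "PMl m J") auto
      next
        case False
        then have "PMl m q \<noteq> 0" using q unfolding cc_def by simp
        then have "mon z (m - PMs J 1) = 0"
          by (intro mon_zero_factor[of q]) (use False zq in \<open>auto simp: in_keys_iff lookup_minus lookup_single\<close>)
        then show ?thesis by simp
      qed
      then show ?thesis using False by auto
    qed
  qed
  have "eval z (Dv J Q) = (\<Sum>m\<in>PMk Q. if P m then PMl Q m * (\<Prod>e\<in>{e\<in>PMk m. even e}. z e ^ PMl m e) else 0)"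
    unfolding RHS by (rule sum.cong[OF refl]) (rule tm)
  also have "\<dots> = (\<Sum>m\<in>{m\<in>PMk Q. P m}. PMl Q m * (\<Prod>e\<in>{e\<in>PMk m. even e}. z e ^ PMl m e))"
    by (simp add: sum.inter_filter)
  finally show ?thesis using LHS unfolding Q_def cc_def by simp
qed

lemma Var_power_single: "(Var w :: 'a::comm_semiring_1 mpoly) ^ e = PMs (PMs w e) 1"
proof (induction e)
  case 0 then show ?case by simp
next
  case (Suc e)
  have "PMs w (Suc e) = PMs w 1 + PMs w e" by (simp add: single_add[symmetric])
  then show ?case using Suc by (simp add: Var_def mult_single)
qed

lemma prod_Var_single:
  "(\<Prod>w\<in>S. (Var w :: 'a::comm_semiring_1 mpoly) ^ e w) = PMs (\<Sum>w\<in>S. PMs w (e w)) 1"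
proof (induction S rule: infinite_finite_induct)
  case (insert x F)
  then show ?case by (simp add: Var_power_single mult_single)
qed simp_all

lemma monomial_single:
  "Const c * (\<Prod>w\<in>PMk m. (Var w :: 'a::comm_semiring_1 mpoly) ^ PMl m w) = PMs m c"
proof -
  have "(\<Sum>w\<in>PMk m. PMs w (PMl m w)) = m" by (rule pm_expand[symmetric])
  then show ?thesis by (simp add: prod_Var_single Const_def mult_single)
qed

lemma subst_Var: "subst Var p = (p :: 'a::comm_semiring_1 mpoly)"
  unfolding subst_def monomial_single by (rule pm_expand[symmetric])

lemma ideal_zero: "0 \<in> ideal_gen n G"
  unfolding ideal_gen_def by (intro CollectI exI[of _ "\<lambda>_. 0"]) simp

lemma ideal_gen_mem:
  assumes "finite G" "g \<in> G"
  shows "g \<in> ideal_gen n (G :: 'a::comm_semiring_1 mpoly set)"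
  unfolding ideal_gen_def
proof (intro CollectI exI[of _ "\<lambda>g'. if g' = g then 1 else 0"] conjI)
  show "\<forall>g'\<in>G. vars (if g' = g then 1 else 0) \<subseteq> {1..n}" by (auto simp: vars_def)
  show "g = (\<Sum>g'\<in>G. (if g' = g then 1 else 0) * g')"
  proof -
    have "(\<Sum>g'\<in>G. (if g' = g then 1 else 0) * g') = (\<Sum>g'\<in>G. if g' = g then g' else 0)"
      by (intro sum.cong) auto
    then show ?thesis using assms by (simp add: sum.delta)
  qed
qed

lemma ideal_add:
  assumes "f \<in> ideal_gen n G" "h \<in> ideal_gen n G"
  shows "f + h \<in> ideal_gen n (G :: 'a::comm_semiring_1 mpoly set)"
proof -
  obtain c where c: "\<forall>g\<in>G. vars (c g) \<subseteq> {1..n}" "f = (\<Sum>g\<in>G. c g * g)"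
    using assms(1) unfolding ideal_gen_def by blast
  obtain d where d: "\<forall>g\<in>G. vars (d g) \<subseteq> {1..n}" "h = (\<Sum>g\<in>G. d g * g)"
    using assms(2) unfolding ideal_gen_def by blast
  show ?thesis unfolding ideal_gen_def
  proof (intro CollectI exI[of _ "\<lambda>g. c g + d g"] conjI)
    show "\<forall>g\<in>G. vars (c g + d g) \<subseteq> {1..n}" using c(1) d(1) vars_add by blast
    show "f + h = (\<Sum>g\<in>G. (c g + d g) * g)" using c(2) d(2) by (simp add: distrib_right sum.distrib)
  qed
qed

lemma ideal_mult:
  assumes "f \<in> ideal_gen n G" "vars h \<subseteq> {1..n}"
  shows "h * f \<in> ideal_gen n (G :: 'a::comm_semiring_1 mpoly set)"
proof -
  obtain c where c: "\<forall>g\<in>G. vars (c g) \<subseteq> {1..n}" "f = (\<Sum>g\<in>G. c g * g)"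
    using assms(1) unfolding ideal_gen_def by blast
  show ?thesis unfolding ideal_gen_def
  proof (intro CollectI exI[of _ "\<lambda>g. h * c g"] conjI)
    show "\<forall>g\<in>G. vars (h * c g) \<subseteq> {1..n}" using c(1) assms(2) vars_mult by blast
    show "h * f = (\<Sum>g\<in>G. (h * c g) * g)" using c(2) by (simp add: sum_distrib_left mult.assoc)
  qed
qed

lemma ideal_uminus:
  assumes "f \<in> ideal_gen n G"
  shows "- f \<in> ideal_gen n (G :: 'a::comm_ring_1 mpoly set)"
  using ideal_mult[OF assms, of "Const (-1)"] by (simp add: Const_def single_uminus)

lemma ideal_diff:
  assumes "f \<in> ideal_gen n G" "h \<in> ideal_gen n G"
  shows "f - h \<in> ideal_gen n (G :: 'a::comm_ring_1 mpoly set)"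
  using ideal_add[OF assms(1) ideal_uminus[OF assms(2)]] by simp

lemma ideal_sum:
  assumes "\<And>x. x \<in> S \<Longrightarrow> f x \<in> ideal_gen n G"
  shows "sum f S \<in> ideal_gen n (G :: 'a::comm_semiring_1 mpoly set)"
  using assms by (induction S rule: infinite_finite_induct) (auto simp: ideal_zero ideal_add)

lemma ideal_power_diff:
  assumes "x - y \<in> ideal_gen n G" "vars x \<subseteq> {1..n}" "vars y \<subseteq> {1..n}"
  shows "x ^ e - y ^ e \<in> ideal_gen n (G :: 'a::comm_ring_1 mpoly set)"
proof -
  have v: "vars (\<Sum>i<e. y ^ (e - Suc i) * x ^ i) \<subseteq> {1..n}"
  proof -
    have "vars (\<Sum>i<e. y ^ (e - Suc i) * x ^ i) \<subseteq> (\<Union>i<e. vars (y ^ (e - Suc i) * x ^ i))" by (rule vars_sum)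
    also have "\<dots> \<subseteq> {1..n}"
    proof (rule UN_least)
      fix i
      show "vars (y ^ (e - Suc i) * x ^ i) \<subseteq> {1..n}"
        using vars_mult[of "y ^ (e - Suc i)" "x ^ i"] vars_power[of y "e - Suc i"] vars_power[of x i] assms(2,3)
        by blast
    qed
    finally show ?thesis .
  qed
  show ?thesis unfolding power_diff_sumr2
    using ideal_mult[OF assms(1) v] by (simp add: mult.commute)
qed

lemma ideal_prod_diff:
  assumes "\<And>w. w \<in> S \<Longrightarrow> x w - y w \<in> ideal_gen n G"
    "\<And>w. w \<in> S \<Longrightarrow> vars (x w) \<subseteq> {1..n}" "\<And>w. w \<in> S \<Longrightarrow> vars (y w) \<subseteq> {1..n}"
  shows "prod x S - prod y S \<in> ideal_gen n (G :: 'a::comm_ring_1 mpoly set)"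
  using assms
proof (induction S rule: infinite_finite_induct)
  case (infinite S) then show ?case by (simp add: ideal_zero)
next
  case empty then show ?case by (simp add: ideal_zero)
next
  case (insert s F)
  have eq: "prod x (insert s F) - prod y (insert s F) = x s * (prod x F - prod y F) + prod y F * (x s - y s)"
    using insert.hyps by (simp add: algebra_simps)
  have vy: "vars (prod y F) \<subseteq> {1..n}"
    using vars_prod[of y F] insert.prems(3) by blast
  show ?case unfolding eq
    by (intro ideal_add ideal_mult insert.IH insert.prems vy) auto
qed

lemma ideal_subst_diff:
  fixes f :: "'a::comm_ring_1 mpoly"
  assumes vf: "vars f \<subseteq> {1..n}"
    and gen: "\<And>v. v \<in> {1..n} \<Longrightarrow> Var v - \<sigma> v \<in> ideal_gen n G"
    and vs: "\<And>v. v \<in> {1..n} \<Longrightarrow> vars (\<sigma> v) \<subseteq> {1..n}"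
  shows "f - subst \<sigma> f \<in> ideal_gen n G"
proof -
  have "f - subst \<sigma> f = subst Var f - subst \<sigma> f" by (simp add: subst_Var)
  also have "\<dots> = (\<Sum>m\<in>PMk f. Const (PMl f m) * ((\<Prod>v\<in>PMk m. Var v ^ PMl m v) - (\<Prod>v\<in>PMk m. \<sigma> v ^ PMl m v)))"
    unfolding subst_def by (simp add: sum_subtractf algebra_simps)
  also have "\<dots> \<in> ideal_gen n G"
  proof (rule ideal_sum, rule ideal_mult)
    fix m assume m: "m \<in> PMk f"
    have km: "PMk m \<subseteq> {1..n}" using m vf unfolding vars_def by auto
    show "(\<Prod>v\<in>PMk m. Var v ^ PMl m v) - (\<Prod>v\<in>PMk m. \<sigma> v ^ PMl m v) \<in> ideal_gen n G"
    proof (rule ideal_prod_diff)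
      fix w assume "w \<in> PMk m"
      then have w: "w \<in> {1..n}" using km by auto
      have vV: "vars (Var w :: 'a mpoly) \<subseteq> {1..n}" using vars_Var[of w] w by auto
      show "Var w ^ PMl m w - \<sigma> w ^ PMl m w \<in> ideal_gen n G"
        by (rule ideal_power_diff[OF gen[OF w] vV vs[OF w]])
      show "vars (Var w ^ PMl m w :: 'a mpoly) \<subseteq> {1..n}" using vars_power vV by blast
      show "vars (\<sigma> w ^ PMl m w) \<subseteq> {1..n}" using vars_power vs[OF w] by blast
    qed
  qed simp
  finally show ?thesis .
qed



lemma pderiv_line0:
  fixes a :: "nat \<Rightarrow> 'a::idom"
  assumes "l \<in> {1..n}" "1 \<le> m"
  shows "poly (pderiv (\<Sum>v\<in>{1..n}. [:a v, if v = l then 1 else 0:] ^ m)) 0 = of_nat m * a l ^ (m - 1)"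
proof -
  obtain m' where m': "m = Suc m'" using assms(2) by (cases m) auto
  have "poly (pderiv (\<Sum>v\<in>{1..n}. [:a v, if v = l then 1 else 0:] ^ m)) 0
     = (\<Sum>v\<in>{1..n}. of_nat m * a v ^ m' * (if v = l then 1 else 0))"
    unfolding pderiv_sum m' pderiv_power_Suc poly_sum
    by (intro sum.cong refl) (simp add: pderiv_pCons)
  also have "\<dots> = of_nat m * a l ^ (m - 1)"
    using assms(1) by (simp add: m' if_distrib sum.delta cong: if_cong)
  finally show ?thesis .
qed

definition bpt :: "nat \<Rightarrow> (nat \<Rightarrow> 'a::ab_group_add) \<Rightarrow> nat \<Rightarrow> 'a" where
  "bpt i a v = (if v \<le> i then a v else if v \<le> 2 * i then - a (v - i) else 0)"

lemma sum_split_2i: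
  fixes f :: "nat \<Rightarrow> 'a::comm_monoid_add"
  shows "(\<Sum>l\<in>{1..2*i}. f l) = (\<Sum>l\<in>{1..i}. f l + f (l + i))"
proof -
  have "{1..2*i} = {1..i} \<union> {Suc i..2*i}" by auto
  then have "(\<Sum>l\<in>{1..2*i}. f l) = (\<Sum>l\<in>{1..i}. f l) + (\<Sum>l\<in>{Suc i..2*i}. f l)"
    by (simp add: sum.union_disjoint)
  also have "{Suc i..2*i} = (\<lambda>l. l + i) ` {1..i}"
  proof
    show "{Suc i..2*i} \<subseteq> (\<lambda>l. l + i) ` {1..i}"
    proof
      fix x assume "x \<in> {Suc i..2*i}"
      then show "x \<in> (\<lambda>l. l + i) ` {1..i}" by (intro image_eqI[of _ _ "x - i"]) auto
    qed
  qed auto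
  also have "(\<Sum>l\<in>(\<lambda>l. l + i) ` {1..i}. f l) = (\<Sum>l\<in>{1..i}. f (l + i))"
    by (subst sum.reindex) (auto simp: inj_on_def)
  finally show ?thesis by (simp add: sum.distrib)
qed

lemma n_cases: "n = 2 * (n div 2) \<or> n = 2 * (n div 2) + 1" for n :: nat
  by presburger

lemma psum_bpt_odd:
  fixes a :: "nat \<Rightarrow> 'a::comm_ring_1"
  assumes "odd q" "i = n div 2"
  shows "psum n (bpt i a) q = 0"
proof -
  have s2: "(\<Sum>l\<in>{1..2*i}. bpt i a l ^ q) = 0"
  proof -
    have "(\<Sum>l\<in>{1..2*i}. bpt i a l ^ q) = (\<Sum>l\<in>{1..i}. bpt i a l ^ q + bpt i a (l + i) ^ q)"
      by (rule sum_split_2i)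
    also have "\<dots> = (\<Sum>l\<in>{1..i}. a l ^ q + (- a l) ^ q)"
      by (intro sum.cong refl) (auto simp: bpt_def)
    also have "\<dots> = 0" using assms(1) by (simp add: power_minus_odd)
    finally show ?thesis .
  qed
  consider "n = 2 * i" | "n = 2 * i + 1" using n_cases[of n] unfolding assms(2) by blast
  then show ?thesis
  proof cases
    case 1 then show ?thesis using s2 by (simp add: psum_def)
  next
    case 2
    then have "{1..n} = insert n {1..2*i}" by auto
    moreover have "bpt i a n = 0" using 2 by (simp add: bpt_def)
    moreover have "q \<noteq> 0" using assms(1) by (metis odd_pos neq0_conv)
    ultimately show ?thesis using s2 2 by (simp add: psum_def power_0_left)
  qed
qed

lemma neg_self_ne:
  fixes x :: "'a::field_char_0"
  assumes "x \<noteq> 0" shows "x \<noteq> - x"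
proof
  assume xx: "x = - x"
  have "x + x = 0" by (subst (2) xx) (rule add.right_inverse)
  then have "2 * x = 0" by (simp only: mult_2)
  then show False using assms by simp
qed

lemma bpt1: "x \<le> i \<Longrightarrow> bpt i a x = a x" by (simp add: bpt_def)
lemma bpt2: "\<not> x \<le> i \<Longrightarrow> x \<le> 2 * i \<Longrightarrow> bpt i a x = - a (x - i)" by (simp add: bpt_def)
lemma bpt3: "\<not> x \<le> 2 * i \<Longrightarrow> bpt i a x = 0" by (simp add: bpt_def)

lemma inj_bpt:
  fixes a :: "nat \<Rightarrow> 'a::field_char_0"
  assumes g: "good n a" and i: "i = n div 2"
  shows "inj_on (bpt i a) {1..n}"
proof (rule inj_onI)
  fix x y assume x: "x \<in> {1..n}" and y: "y \<in> {1..n}" and eq: "bpt i a x = bpt i a y"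
  have nz: "\<And>l. l \<in> {1..n} \<Longrightarrow> a l \<noteq> 0" using g unfolding good_def by blast
  have ne: "\<And>l l'. l \<in> {1..n} \<Longrightarrow> l' \<in> {1..n} \<Longrightarrow> l \<noteq> l' \<Longrightarrow> a l \<noteq> a l'"
    using g unfolding good_def by blast
  have ne2: "\<And>l l'. l \<in> {1..n} \<Longrightarrow> l' \<in> {1..n} \<Longrightarrow> l \<noteq> l' \<Longrightarrow> a l \<noteq> - a l'"
    using g unfolding good_def by blast
  have neg: "a l \<noteq> - a l'" if "l \<in> {1..n}" "l' \<in> {1..n}" for l l'
  proof (cases "l = l'")
    case True then show ?thesis using nz[OF that(1)] neg_self_ne by blast
  qed (use ne2 that in blast)
  have n2: "2 * i \<le> n" using i by simp
  have R1: "x \<in> {1..n}" if "x \<le> i" "1 \<le> x" for x using that n2 by auto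
  have R2: "x - i \<in> {1..n}" if "\<not> x \<le> i" "x \<le> 2 * i" for x using that n2 by auto
  have R3: "x = n" if "\<not> x \<le> 2 * i" "x \<in> {1..n}" for x using that i by auto
  consider "x \<le> i" | "\<not> x \<le> i" "x \<le> 2 * i" | "\<not> x \<le> 2 * i" by linarith
  then show "x = y"
  proof cases
    case 1
    then have bx: "bpt i a x = a x" by (rule bpt1)
    have xn: "x \<in> {1..n}" using x by simp
    consider "y \<le> i" | "\<not> y \<le> i" "y \<le> 2 * i" | "\<not> y \<le> 2 * i" by linarith
    then show ?thesis
    proof cases
      case 1 then show ?thesis using eq bx bpt1[of y i a] ne[OF xn] y by fastforce
    next
      case 2 then show ?thesis using eq bx bpt2[of y i a] neg[OF xn R2[OF 2]] by simp
    next
      case 3 then show ?thesis using eq bx bpt3[of y i a] nz[OF xn] by simp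
    qed
  next
    case 2
    then have bx: "bpt i a x = - a (x - i)" by (rule bpt2)
    note xn = R2[OF 2]
    consider "y \<le> i" | "\<not> y \<le> i" "y \<le> 2 * i" | "\<not> y \<le> 2 * i" by linarith
    then show ?thesis
    proof cases
      case 1
      have yn: "y \<in> {1..n}" using y by simp
      then show ?thesis using eq bx bpt1[OF 1, of a] neg[OF yn xn] by (metis minus_minus)
    next
      case 3 then show ?thesis using eq bx bpt3[of y i a] nz[OF xn] by simp
    next
      case yc2: 2
      have "a (x - i) = a (y - i)" using eq bx bpt2[OF yc2, of a] by simp
      then have "x - i = y - i" using ne[OF xn R2[OF yc2]] by blast
      then show ?thesis using 2 yc2 by simp
    qed
  next
    case 3
    then have bx: "bpt i a x = 0" by (rule bpt3)
    consider "y \<le> i" | "\<not> y \<le> i" "y \<le> 2 * i" | "\<not> y \<le> 2 * i" by linarith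
    then show ?thesis
    proof cases
      case 1
      have yn: "y \<in> {1..n}" using y by simp
      then show ?thesis using eq bx bpt1[OF 1, of a] nz[OF yn] by simp
    next
      case 2 then show ?thesis using eq bx bpt2[OF 2, of a] nz[OF R2[OF 2]] by simp
    next
      case yc3: 3
      then show ?thesis using R3[OF 3 x] R3[OF yc3 y] by simp
    qed
  qed
qed

lemma main_eval:
  fixes a :: "nat \<Rightarrow> 'a::field_char_0" and n k :: nat
  assumes n: "2 \<le> n" and g: "good n a"
  shows "eval (bpt (n div 2) a) (r n (2 * k + 2 * ((n - 1) div 2) + 1) :: 'a mpoly)
    = of_nat (2 * k + 2 * ((n - 1) div 2) + 1) / of_nat (2 * ((n - 1) div 2) + 1)
      * hh (map (\<lambda>l. a l ^ 2) (rev [1..<Suc (n div 2)])) k"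
proof -
  define i where "i = n div 2"
  define j where "j = (n - 1) div 2"
  define N where "N = 2 * k + 2 * j + 1"
  define J where "J = 2 * j + 1"
  define e where "e = n - 2 * i"
  define b where "b = bpt i a"
  have ar: "1 \<le> i" "e \<le> 1" "n = 2 * i + e" "2 * j = 2 * (i - 1) + 2 * e" "J \<le> n" "1 \<le> J"
    "J - 1 = 2 * e + 2 * (i - 1)" "N - 1 = 2 * e + 2 * (k + i - 1)" "1 \<le> N"
  proof -
    have e1: "n = 2 * i + e" unfolding e_def i_def by simp
    have i1: "1 \<le> i" using n unfolding i_def by simp
    have ee: "e \<le> 1" unfolding e_def i_def by simp
    have jeq: "j = i - 1 + e" unfolding j_def i_def e_def using n by presburger
    show "1 \<le> i" "e \<le> 1" "n = 2 * i + e" "2 * j = 2 * (i - 1) + 2 * e" "J \<le> n" "1 \<le> J"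
      "J - 1 = 2 * e + 2 * (i - 1)" "N - 1 = 2 * e + 2 * (k + i - 1)" "1 \<le> N"
      using e1 i1 ee jeq unfolding J_def N_def by arith+
  qed
  define Q where "Q = Repr n (power_sum n N :: 'a mpoly)"
  have vQ: "vars Q \<subseteq> {1..n}" and evQ: "\<And>x. eval (psum n x) Q = psum n x N"
    using Repr_psum[of n N] unfolding Q_def by auto
  have r_eq: "eval b (r n N :: 'a mpoly) = eval (psum n b) (Dv J Q)"
  proof -
    have "eval b (r n N :: 'a mpoly) = eval (psum n b) (odd_coeff n (power_sum n N :: 'a mpoly) (\<lambda>q. if q = J then 1 else 0))"
      unfolding r_def multiplier_def J_def j_def by (rule eval_subst_psum)
    also have "\<dots> = eval (psum n b) (Dv J Q)"
      unfolding J_def j_def Q_def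
      by (rule odd_coeff_eval) (use n vQ psum_bpt_odd[of _ i n a] i_def b_def Q_def in auto)
    finally show ?thesis .
  qed
  define Y where "Y = map (\<lambda>l. a l ^ 2) [1..<Suc i]"
  have lY: "length Y = i" "Y \<noteq> []" using ar(1) by (auto simp: Y_def)
  obtain V where V: "degree V \<le> 2 * (i - 1)" "coeff V (2 * (i - 1)) = hh (rev Y @ []) (Suc (k + i - 1) - i)"
    "\<And>y. y ^ 2 \<in> set Y \<Longrightarrow> poly V y = hh [y ^ 2] (k + i - 1)"
    using interp[OF lY(2), of "k + i - 1" "[]"] lY(1) ar(1) by auto
  define S where "S = smult (of_nat N) (monom 1 (2 * e) * V)"
  have dS: "degree S < n"
  proof -
    have "degree S \<le> degree (monom (1::'a) (2 * e)) + degree V"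
      unfolding S_def using degree_smult_le degree_mult_le order.trans by blast
    also have "\<dots> \<le> 2 * e + 2 * (i - 1)" using V(1) degree_monom_le[of "1::'a" "2 * e"] by linarith
    finally show ?thesis using ar by linarith
  qed
  have pS: "poly S y = of_nat N * y ^ (2 * e) * poly V y" for y
    by (simp add: S_def poly_monom)
  have PS: "poly S (b l) = of_nat N * b l ^ (N - 1)" if l: "l \<in> {1..n}" for l
  proof (cases "l \<le> 2 * i")
    case True
    have "b l ^ 2 \<in> set Y"
    proof (cases "l \<le> i")
      case True
      then have "b l ^ 2 = a l ^ 2" by (simp add: b_def bpt_def)
      moreover have "l \<in> set [1..<Suc i]" using True l by auto
      ultimately show ?thesis unfolding Y_def by auto
    next
      case False
      then have "b l ^ 2 = a (l - i) ^ 2" using \<open>l \<le> 2 * i\<close> by (simp add: b_def bpt_def)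
      moreover have "l - i \<in> set [1..<Suc i]" using False \<open>l \<le> 2 * i\<close> by auto
      ultimately show ?thesis unfolding Y_def by auto
    qed
    then have "poly V (b l) = b l ^ (2 * (k + i - 1))"
      using V(3) by (simp add: hh_single power_mult)
    then show ?thesis using ar(8) by (simp add: pS power_add[symmetric])
  next
    case False
    then have "b l = 0" by (simp add: b_def bpt_def)
    moreover have e1: "e = 1" using False l ar by auto
    moreover have "N - 1 \<noteq> 0" using ar(8) e1 by simp
    ultimately show ?thesis by (simp add: pS power_0_left)
  qed
  have inj: "inj_on b {1..n}" unfolding b_def i_def using g by (rule inj_bpt) simp
  have jac: "(\<Sum>m\<in>{1..n}. eval (psum n b) (Dv m Q) * (of_nat m * b l ^ (m - 1))) = poly S (b l)"
    if l: "l \<in> {1..n}" for l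
  proof -
    define C where "C = (\<Sum>v\<in>{1..n}. [:b v, if v = l then 1 else 0:] ^ N)"
    have "poly (pderiv C) 0 = (\<Sum>m\<in>{1..n}. eval (psum n b) (Dv m Q) * (of_nat m * b l ^ (m - 1)))"
    proof (rule line_deriv[OF vQ l, of "{}"])
      fix t :: 'a
      have "psum n (b(l := b l + t)) N = poly C t"
        unfolding C_def psum_def poly_sum poly_power by (intro sum.cong refl) auto
      then show "eval (psum n (b(l := b l + t))) Q = poly C t" using evQ by simp
    qed simp
    moreover have "poly (pderiv C) 0 = of_nat N * b l ^ (N - 1)"
      unfolding C_def by (rule pderiv_line0[OF l ar(9)])
    ultimately show ?thesis using PS[OF l] by simp
  qed
  have "eval (psum n b) (Dv J Q) * of_nat J = coeff S (J - 1)"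
    by (rule jacobian_zero[OF vQ inj jac dS]) (use ar in auto)
  moreover have "coeff S (J - 1) = of_nat N * hh (rev Y) k"
    using ar(7) V(2) ar(1) by (simp add: S_def coeff_monom_mult)
  moreover have "(of_nat J :: 'a) \<noteq> 0" using ar(6) by simp
  ultimately have "eval (psum n b) (Dv J Q) = of_nat N / of_nat J * hh (rev Y) k"
    by (simp add: field_simps)
  then show ?thesis
    using r_eq unfolding b_def i_def J_def N_def j_def Y_def by (simp add: rev_map)
qed

theorem mainTheorem4:
  fixes n k :: nat
  assumes "n \<ge> 2"
  shows "(r n (2 * k + 2 * ((n - 1) div 2) + 1) :: 'a::field_char_0 mpoly)
          - Const (of_nat (2 * k + 2 * ((n - 1) div 2) + 1) / of_nat (2 * ((n - 1) div 2) + 1))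
            * subst (\<lambda>l. Var l ^ 2) (complete_hom (n div 2) k)
         \<in> ideal_gen n (I_gens n)"
proof -
  define i where "i = n div 2"
  define N where "N = 2 * k + 2 * ((n - 1) div 2) + 1"
  define c :: 'a where "c = of_nat N / of_nat (2 * ((n - 1) div 2) + 1)"
  define T :: "'a mpoly" where "T = r n N - Const c * subst (\<lambda>l. Var l ^ 2) (complete_hom i k)"
  define \<sigma> :: "nat \<Rightarrow> 'a mpoly" where "\<sigma> v = (if v \<le> i then Var v else if v \<le> 2 * i then - Var (v - i) else 0)" for v
  have n2: "2 * i \<le> n" unfolding i_def by simp
  have vT: "vars T \<subseteq> {1..n}"
  proof -
    have v1: "vars (r n N :: 'a mpoly) \<subseteq> {1..n}"
      unfolding r_def multiplier_def by (rule vars_subst_psum)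
    have "vars (subst (\<lambda>l. Var l ^ 2) (complete_hom i k) :: 'a mpoly) \<subseteq> (\<Union>v\<in>vars (complete_hom i k :: 'a mpoly). vars (Var v ^ 2 :: 'a mpoly))"
      by (rule vars_subst)
    also have "\<dots> \<subseteq> {1..n}"
    proof (rule UN_least)
      fix v assume "v \<in> vars (complete_hom i k :: 'a mpoly)"
      then have "v \<in> {1..n}" using vars_complete_hom[of i k] n2 by auto
      then show "vars (Var v ^ 2 :: 'a mpoly) \<subseteq> {1..n}" using vars_power[of "Var v" 2] vars_Var[of v] by auto
    qed
    finally have v2: "vars (Const c * subst (\<lambda>l. Var l ^ 2) (complete_hom i k) :: 'a mpoly) \<subseteq> {1..n}"
      using vars_mult[of "Const c" "subst (\<lambda>l. Var l ^ 2) (complete_hom i k) :: 'a mpoly"] by auto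
    show ?thesis unfolding T_def using vars_minus v1 v2 by blast
  qed
  have v\<sigma>: "vars (\<sigma> v) \<subseteq> {1..n}" if "v \<in> {1..n}" for v
  proof -
    have a1: "vars (Var v :: 'a mpoly) \<subseteq> {1..n}" using that vars_Var[of v] by auto
    have a2: "vars (- Var (v - i) :: 'a mpoly) \<subseteq> {1..n}" if "\<not> v \<le> i" "v \<le> 2 * i"
    proof -
      have "v - i \<in> {1..n}" using that n2 by auto
      then show ?thesis using vars_Var[of "v - i"] by auto
    qed
    show ?thesis using a1 a2 by (auto simp: \<sigma>_def)
  qed
  have finG: "finite (I_gens n :: 'a mpoly set)" by (simp add: I_gens_def)
  have gen: "Var v - \<sigma> v \<in> ideal_gen n (I_gens n)" if v: "v \<in> {1..n}" for v
  proof -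
    consider "v \<le> i" | "\<not> v \<le> i" "v \<le> 2 * i" | "\<not> v \<le> 2 * i" by linarith
    then show ?thesis
    proof cases
      case 1 then show ?thesis by (simp add: \<sigma>_def ideal_zero)
    next
      case 2
      then have "Var v - \<sigma> v = Var ((v - i) + n div 2) + Var (v - i)" by (simp add: \<sigma>_def i_def)
      moreover have "v - i \<in> {1..n div 2}" using 2 by (auto simp: i_def)
      ultimately have "Var v - \<sigma> v \<in> I_gens n" unfolding I_gens_def by auto
      then show ?thesis by (rule ideal_gen_mem[OF finG])
    next
      case 3
      then have "v = n" "odd n" using v n2 unfolding i_def by auto
      then have "Var v - \<sigma> v \<in> I_gens n" using 3 by (simp add: \<sigma>_def I_gens_def)
      then show ?thesis by (rule ideal_gen_mem[OF finG])
    qed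
  qed
  have sT: "subst \<sigma> T = 0"
  proof (rule identity[of _ n])
    have "vars (subst \<sigma> T) \<subseteq> (\<Union>v\<in>vars T. vars (\<sigma> v))" by (rule vars_subst)
    also have "\<dots> \<subseteq> {1..n}" using vT v\<sigma> by blast
    finally show "vars (subst \<sigma> T) \<subseteq> {1..n}" .
  next
    fix a :: "nat \<Rightarrow> 'a" assume g: "good n a"
    have fe: "(\<lambda>v. eval a (\<sigma> v)) = bpt i a" by (rule ext) (simp add: \<sigma>_def bpt_def evl_minus eval_uminus)
    have hb: "hh (map (\<lambda>l. bpt i a l ^ 2) (rev [1..<Suc i])) k = hh (map (\<lambda>l. a l ^ 2) (rev [1..<Suc i])) k"
      by (rule arg_cong[where f="\<lambda>x. hh x k"], rule map_cong) (auto simp: bpt_def)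
    have "eval a (subst \<sigma> T) = eval (bpt i a) T" by (simp add: eval_subst fe)
    also have "\<dots> = eval (bpt i a) (r n N) - c * eval (\<lambda>l. bpt i a l ^ 2) (complete_hom i k)"
    proof -
      have "(\<lambda>v. eval (bpt i a) (Var v ^ 2 :: 'a mpoly)) = (\<lambda>l. bpt i a l ^ 2)" by (simp add: eval_power)
      then show ?thesis unfolding T_def by (simp add: evl_minus eval_mult eval_subst)
    qed
    also have "\<dots> = 0"
      using main_eval[OF assms g, of k] unfolding eval_complete_hom hb
      by (simp add: c_def N_def i_def)
    finally show "eval a (subst \<sigma> T) = 0" .
  qed
  have "T - subst \<sigma> T \<in> ideal_gen n (I_gens n)"
    by (rule ideal_subst_diff[OF vT gen v\<sigma>])
  then show ?thesis using sT unfolding T_def c_def N_def i_def by simp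
qed


end
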